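(* Let $X_1,\ldots,X_k\in\mathbf{M}_{2N}(\mathbb{C})$ commute pairwise and satisfy $X_j^{*}=X_j^{\sharp}$ for all $j$. (1) There is a single symplectic unitary $U$ such that for all $j$, \[U^{*}X_jU=\begin{bmatrix}T_j & S_j\\ -\overline{S_j} & \overline{T_j}\end{bmatrix}\] with each $T_j$ upper-triangular and each $S_j$ strictly upper-triangular ($N\times N$ blocks). (2) If, in addition, the $X_j$ are normal, then there is a single symplectic unitary $U$ such that for all $j$, \[U^{*}X_jU=\begin{bmatrix}D_j & 0\\ 0 & \overline{D_j}\end{bmatrix}\] with each $D_j$ diagonal. (3) Every symplectic unitary has determinant one.
   Context: For $X\in\mathbf{M}_{2N}(\mathbb{C})$ written in $N\times N$ blocks $X=\begin{bmatrix}A&B\\C&D\end{bmatrix}$, the dual operation is $X^{\sharp}=\begin{bmatrix}D^{\mathrm T}&-B^{\mathrm T}\\-C^{\mathrm T}&A^{\mathrm T}\end{bmatrix}$, equivalently $X^\sharp=-ZX^{\mathrm T}Z$ where $Z=\begin{bmatrix}0&I\\-I&0\end{bmatrix}$. A symplectic unitary is a unitary $U\in\mathbf{M}_{2N}(\mathbb{C})$ with $U^{\mathrm T}ZU=Z$. $\overline{M}$ denotes the entrywise complex conjugate. *)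

theory Defs
  imports "Jordan_Normal_Form.Matrix" "Jordan_Normal_Form.Determinant" Complex_Main
begin

definition conj_mat :: "complex mat \<Rightarrow> complex mat" where
  "conj_mat M = map_mat cnj M"

definition ctrans_mat :: "complex mat \<Rightarrow> complex mat" where
  "ctrans_mat M = transpose_mat (conj_mat M)"

definition Zmat :: "nat \<Rightarrow> complex mat" where
  "Zmat N = four_block_mat (0\<^sub>m N N) (1\<^sub>m N) (- 1\<^sub>m N) (0\<^sub>m N N)"

definition sharp :: "nat \<Rightarrow> complex mat \<Rightarrow> complex mat" where
  "sharp N X = - (Zmat N * transpose_mat X * Zmat N)"

definition unitary_mat :: "nat \<Rightarrow> complex mat \<Rightarrow> bool" where
  "unitary_mat n U \<longleftrightarrow> U \<in> carrier_mat n n \<and> ctrans_mat U * U = 1\<^sub>m n \<and> U * ctrans_mat U = 1\<^sub>m n"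

definition symplectic_unitary :: "nat \<Rightarrow> complex mat \<Rightarrow> bool" where
  "symplectic_unitary N U \<longleftrightarrow> unitary_mat (2 * N) U \<and> transpose_mat U * Zmat N * U = Zmat N"

definition normal_mat :: "complex mat \<Rightarrow> bool" where
  "normal_mat X \<longleftrightarrow> X * ctrans_mat X = ctrans_mat X * X"

definition strictly_upper_triangular :: "'a::zero mat \<Rightarrow> bool" where
  "strictly_upper_triangular A \<longleftrightarrow> (\<forall>i < dim_row A. \<forall>j \<le> i. j < dim_col A \<longrightarrow> A $$ (i,j) = 0)"

end

theory Submission
  imports Defs "Jordan_Normal_Form.Schur_Decomposition"
begin


definition ip :: "nat \<Rightarrow> complex vec \<Rightarrow> complex vec \<Rightarrow> complex" where
  "ip n u v = (\<Sum>i<n. cnj (u$i) * v$i)"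

definition Jv :: "nat \<Rightarrow> complex vec \<Rightarrow> complex vec" where
  "Jv N v = vec (2*N) (\<lambda>i. if i < N then - cnj (v $ (i+N)) else cnj (v $ (i-N)))"

definition qmat :: "nat \<Rightarrow> complex mat \<Rightarrow> bool" where
  "qmat N X \<longleftrightarrow> X \<in> carrier_mat (2*N) (2*N) \<and>
     (\<forall>i<N. \<forall>l<N. X$$(i+N,l+N) = cnj (X$$(i,l)) \<and> X$$(i+N,l) = - cnj (X$$(i,l+N)))"

lemma sum2N: fixes N :: nat shows "(\<Sum>i<2*N. f i) = (\<Sum>i<N. f i) + (\<Sum>i<N. f (i+N))"
proof -
  have "(\<Sum>i<2*N. f i) = (\<Sum>i\<in>{0..<N}. f i) + (\<Sum>i\<in>{N..<N+N}. f i)"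
    by (simp add: mult_2 lessThan_atLeast0 sum.atLeastLessThan_concat)
  also have "(\<Sum>i\<in>{N..<N+N}. f i) = (\<Sum>i\<in>{0..<N}. f (i+N))"
    using sum.shift_bounds_nat_ivl[of f 0 N N] by simp
  finally show ?thesis by (simp add: lessThan_atLeast0)
qed

lemma mv_index: "A \<in> carrier_mat n m \<Longrightarrow> v \<in> carrier_vec m \<Longrightarrow> i < n \<Longrightarrow>
  (A *\<^sub>v v) $ i = (\<Sum>l<m. A $$ (i,l) * v $ l)"
  by (auto simp: mult_mat_vec_def scalar_prod_def lessThan_atLeast0 intro!: sum.cong)

lemma row_dot: "A \<in> carrier_mat n m \<Longrightarrow> v \<in> carrier_vec m \<Longrightarrow> i < n \<Longrightarrow>
  row A i \<bullet> v = (\<Sum>l<m. A $$ (i,l) * v $ l)"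
  by (auto simp: scalar_prod_def lessThan_atLeast0 intro!: sum.cong)

lemma Jv_carrier[simp]: "Jv N v \<in> carrier_vec (2*N)" and dim_Jv[simp]: "dim_vec (Jv N v) = 2*N"
  by (auto simp: Jv_def)

lemma Jv_lo[simp]: "i < N \<Longrightarrow> Jv N v $ i = - cnj (v $ (i+N))"
  by (simp add: Jv_def)
lemma Jv_hi[simp]: "i < N \<Longrightarrow> Jv N v $ (i+N) = cnj (v $ i)"
  by (simp add: Jv_def)

lemma ip_conj: "ip n u v = cnj (ip n v u)"
  unfolding ip_def by (simp add: cnj_sum mult.commute)

lemma ip_JJ: "ip (2*N) (Jv N u) (Jv N w) = ip (2*N) w u"
  unfolding ip_def sum2N by (simp add: algebra_simps)

lemma ip_J_self: "ip (2*N) (Jv N u) u = 0"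
  unfolding ip_def sum2N by (simp add: algebra_simps sum_negf)

lemma ip_J_right: "ip (2*N) u (Jv N w) = - cnj (ip (2*N) (Jv N u) w)"
  unfolding ip_def sum2N by (simp add: algebra_simps cnj_sum sum_negf)

lemma JJ_index: "i < 2*N \<Longrightarrow> Jv N (Jv N v) $ i = - v $ i"
  by (cases "i < N") (auto simp: Jv_def)

lemma ip_JJ_left: "ip (2*N) (Jv N (Jv N u)) w = - ip (2*N) u w"
  by (simp add: ip_def JJ_index sum_negf)

lemma JX: assumes q: "qmat N X" and v: "v \<in> carrier_vec (2*N)"
  shows "X *\<^sub>v Jv N v = Jv N (X *\<^sub>v v)"
proof (rule eq_vecI)
  from q have X: "X \<in> carrier_mat (2*N) (2*N)" and
    q1: "\<And>i l. i<N \<Longrightarrow> l<N \<Longrightarrow> X$$(i+N,l+N) = cnj (X$$(i,l))" and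
    q2: "\<And>i l. i<N \<Longrightarrow> l<N \<Longrightarrow> X$$(i+N,l) = - cnj (X$$(i,l+N))"
    unfolding qmat_def by auto
  show "dim_vec (X *\<^sub>v Jv N v) = dim_vec (Jv N (X *\<^sub>v v))" using X by simp
  fix i assume "i < dim_vec (Jv N (X *\<^sub>v v))"
  hence i: "i < 2*N" by simp
  show "(X *\<^sub>v Jv N v) $ i = Jv N (X *\<^sub>v v) $ i"
  proof (cases "i < N")
    case True
    have "(X *\<^sub>v Jv N v) $ i = (\<Sum>l<N. X$$(i,l) * (- cnj (v$(l+N)))) + (\<Sum>l<N. X$$(i,l+N) * cnj (v$l))"
      using X i by (subst mv_index[OF X _ i], simp, simp add: sum2N)
    moreover have "Jv N (X *\<^sub>v v) $ i = - cnj ((\<Sum>l<N. X$$(i+N,l) * v$l) + (\<Sum>l<N. X$$(i+N,l+N) * v$(l+N)))"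
      using X i True v by (simp add: row_dot[OF X v, of "i+N"] sum2N)
    moreover have "\<dots> = - cnj ((\<Sum>l<N. (- cnj (X$$(i,l+N))) * v$l) + (\<Sum>l<N. cnj (X$$(i,l)) * v$(l+N)))"
      using True q1 q2 by simp
    ultimately show ?thesis by (simp add: sum_negf)
  next
    case False
    define i' where "i' = i - N"
    have ii: "i = i' + N" "i' < N" using False i unfolding i'_def by auto
    have "(X *\<^sub>v Jv N v) $ i = (\<Sum>l<N. X$$(i'+N,l) * (- cnj (v$(l+N)))) + (\<Sum>l<N. X$$(i'+N,l+N) * cnj (v$l))"
      using X i ii by (subst mv_index[OF X _ i], simp, simp add: sum2N)
    also have "\<dots> = (\<Sum>l<N. (- cnj (X$$(i',l+N))) * (- cnj (v$(l+N)))) + (\<Sum>l<N. cnj (X$$(i',l)) * cnj (v$l))"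
      using ii q1 q2 by simp
    moreover have "Jv N (X *\<^sub>v v) $ i = cnj ((\<Sum>l<N. X$$(i',l) * v$l) + (\<Sum>l<N. X$$(i',l+N) * v$(l+N)))"
      using X i ii v by (simp add: row_dot[OF X v, of "i'"] sum2N)
    ultimately show ?thesis by (simp add: add.commute)
  qed
qed


definition subsp :: "nat \<Rightarrow> complex vec set \<Rightarrow> bool" where
  "subsp n S \<longleftrightarrow> (\<forall>v\<in>S. v \<in> carrier_vec n) \<and> (\<forall>v\<in>S. \<forall>w\<in>S. v + w \<in> S) \<and> (\<forall>a. \<forall>v\<in>S. a \<cdot>\<^sub>v v \<in> S)"

lemma subsp_minus: assumes "subsp n S" "v \<in> S" "w \<in> S" shows "v - w \<in> S"
proof -
  have "v + (-1) \<cdot>\<^sub>v w \<in> S" using assms unfolding subsp_def by blast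
  moreover have "v + (-1) \<cdot>\<^sub>v w = v - w" using assms unfolding subsp_def
    by (intro eq_vecI) auto
  ultimately show ?thesis by simp
qed

lemma tri_step:
  fixes B :: "complex mat"
  assumes B: "B \<in> carrier_mat n n" and ut: "upper_triangular B" and x: "x \<in> carrier_vec n"
    and m: "m < n" and z: "\<And>i. Suc m \<le> i \<Longrightarrow> i < n \<Longrightarrow> x $ i = 0"
    and i: "m \<le> i" "i < n"
  shows "(B *\<^sub>v x - B$$(m,m) \<cdot>\<^sub>v x) $ i = 0"
proof -
  have "\<forall>l\<in>{..<n}. B $$ (i,l) * x $ l = (if l = m then (if i = m then B$$(m,m) * x$m else 0) else 0)"
  proof
    fix l assume l: "l \<in> {..<n}"
    show "B $$ (i,l) * x $ l = (if l = m then (if i = m then B$$(m,m) * x$m else 0) else 0)"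
    proof (cases "l < i")
      case True then have "B $$ (i,l) = 0" using ut B i unfolding upper_triangular_def by auto
      then show ?thesis using True i by auto
    next
      case False then show ?thesis using z[of l] l i by auto
    qed
  qed
  hence "(\<Sum>l<n. B $$ (i,l) * x $ l) = (\<Sum>l<n. (if l = m then (if i = m then B$$(m,m) * x$m else 0) else 0))"
    by (intro sum.cong) auto
  also have "\<dots> = (if i = m then B$$(m,m) * x$m else 0)" using m by simp
  finally have "(\<Sum>l<n. B $$ (i,l) * x $ l) = (if i = m then B$$(m,m) * x$m else 0)" .
  then show ?thesis using B x i z[of i] by (auto simp: row_dot)
qed

lemma EV:
  fixes Y :: "complex mat"
  assumes Y: "Y \<in> carrier_mat n n" and S: "subsp n S" and inv: "\<forall>v\<in>S. Y *\<^sub>v v \<in> S"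
    and w: "w \<in> S" "w \<noteq> 0\<^sub>v n"
  shows "\<exists>v\<in>S. v \<noteq> 0\<^sub>v n \<and> (\<exists>\<mu>. Y *\<^sub>v v = \<mu> \<cdot>\<^sub>v v)"
proof -
  obtain es where cp: "char_poly Y = (\<Prod>a\<leftarrow>es. [:- a, 1:])" using char_poly_factorized[OF Y] by auto
  define B where "B = schur_upper_triangular Y es"
  have B: "B \<in> carrier_mat n n" "upper_triangular B" "similar_mat Y B"
    using schur_upper_triangular[OF Y cp] unfolding B_def by auto
  obtain P Q where PQ: "similar_mat_wit Y B P Q" using B(3) unfolding similar_mat_def by auto
  have P: "P \<in> carrier_mat n n" and Q: "Q \<in> carrier_mat n n" and PQ1: "P * Q = 1\<^sub>m n"
    and QP1: "Q * P = 1\<^sub>m n" and YPBQ: "Y = P * B * Q"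
    using PQ Y unfolding similar_mat_wit_def Let_def by auto
  define S' where "S' = {x \<in> carrier_vec n. P *\<^sub>v x \<in> S}"
  have Sc: "\<And>v. v \<in> S \<Longrightarrow> v \<in> carrier_vec n" using S unfolding subsp_def by auto
  have PB: "\<And>x. x \<in> carrier_vec n \<Longrightarrow> P *\<^sub>v (B *\<^sub>v x) = Y *\<^sub>v (P *\<^sub>v x)"
  proof -
    fix x :: "complex vec" assume x: "x \<in> carrier_vec n"
    have Pxc: "P *\<^sub>v x \<in> carrier_vec n" using P x by auto
    have "Y *\<^sub>v (P *\<^sub>v x) = (P * B) *\<^sub>v (Q *\<^sub>v (P *\<^sub>v x))"
      unfolding YPBQ by (rule assoc_mult_mat_vec[OF _ Q Pxc]) (use P B in auto)
    also have "\<dots> = P *\<^sub>v (B *\<^sub>v (Q *\<^sub>v (P *\<^sub>v x)))"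
      by (rule assoc_mult_mat_vec[OF P B(1)]) (use Q Pxc in auto)
    also have "Q *\<^sub>v (P *\<^sub>v x) = x" using QP1 P Q x assoc_mult_mat_vec[OF Q P x, symmetric] by simp
    finally show "P *\<^sub>v (B *\<^sub>v x) = Y *\<^sub>v (P *\<^sub>v x)" by simp
  qed
  have main: "\<forall>x\<in>S'. x \<noteq> 0\<^sub>v n \<longrightarrow> (\<forall>i. m \<le> i \<longrightarrow> i < n \<longrightarrow> x $ i = 0) \<longrightarrow>
      (\<exists>x'\<in>S'. x' \<noteq> 0\<^sub>v n \<and> (\<exists>\<mu>. B *\<^sub>v x' = \<mu> \<cdot>\<^sub>v x'))" for m
  proof (induction m)
    case 0
    show ?case
    proof (intro ballI impI)
      fix x assume "x \<in> S'" "x \<noteq> 0\<^sub>v n" "\<forall>i. 0 \<le> i \<longrightarrow> i < n \<longrightarrow> x $ i = 0"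
      then show "\<exists>x'\<in>S'. x' \<noteq> 0\<^sub>v n \<and> (\<exists>\<mu>. B *\<^sub>v x' = \<mu> \<cdot>\<^sub>v x')"
        unfolding S'_def by (auto intro!: eq_vecI)
    qed
  next
    case (Suc m)
    show ?case
    proof (intro ballI impI)
      fix x assume xS: "x \<in> S'" and x0: "x \<noteq> 0\<^sub>v n" and z: "\<forall>i. Suc m \<le> i \<longrightarrow> i < n \<longrightarrow> x $ i = 0"
      have x: "x \<in> carrier_vec n" using xS unfolding S'_def by auto
      show "\<exists>x'\<in>S'. x' \<noteq> 0\<^sub>v n \<and> (\<exists>\<mu>. B *\<^sub>v x' = \<mu> \<cdot>\<^sub>v x')"
      proof (cases "m < n")
        case False
        then have "\<forall>i. m \<le> i \<longrightarrow> i < n \<longrightarrow> x $ i = 0" by auto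
        then show ?thesis using Suc.IH xS x0 by blast
      next
        case True
        define x' where "x' = B *\<^sub>v x - B$$(m,m) \<cdot>\<^sub>v x"
        have x'c: "x' \<in> carrier_vec n" using B x unfolding x'_def by auto
        have "P *\<^sub>v x' = P *\<^sub>v (B *\<^sub>v x) - P *\<^sub>v (B$$(m,m) \<cdot>\<^sub>v x)"
          unfolding x'_def using P B x by (subst mult_minus_distrib_mat_vec[OF P]) auto
        also have "\<dots> = Y *\<^sub>v (P *\<^sub>v x) - B$$(m,m) \<cdot>\<^sub>v (P *\<^sub>v x)"
          using PB[OF x] mult_mat_vec[OF P x] by simp
        finally have Px': "P *\<^sub>v x' = Y *\<^sub>v (P *\<^sub>v x) - B$$(m,m) \<cdot>\<^sub>v (P *\<^sub>v x)" .
        have PxS: "P *\<^sub>v x \<in> S" using xS unfolding S'_def by auto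
        have "P *\<^sub>v x' \<in> S" unfolding Px'
          by (rule subsp_minus[OF S]) (use inv PxS S in \<open>auto simp: subsp_def\<close>)
        hence x'S: "x' \<in> S'" using x'c unfolding S'_def by auto
        show ?thesis
        proof (cases "x' = 0\<^sub>v n")
          case True
          have "B *\<^sub>v x = B$$(m,m) \<cdot>\<^sub>v x"
          proof (rule eq_vecI)
            fix i assume "i < dim_vec (B$$(m,m) \<cdot>\<^sub>v x)"
            then have i: "i < n" using x by auto
            have "x' $ i = 0" using True i by simp
            then show "(B *\<^sub>v x) $ i = (B$$(m,m) \<cdot>\<^sub>v x) $ i" unfolding x'_def using i B x by auto
          qed (use B x in auto)
          then show ?thesis using xS x0 by blast
        next
          case False
          have "\<forall>i. m \<le> i \<longrightarrow> i < n \<longrightarrow> x' $ i = 0"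
            using tri_step[OF B(1) B(2) x True] z unfolding x'_def by auto
          then show ?thesis using Suc.IH x'S False by blast
        qed
      qed
    qed
  qed
  define x where "x = Q *\<^sub>v w"
  have wc: "w \<in> carrier_vec n" using Sc w by auto
  have Px: "P *\<^sub>v x = w" unfolding x_def using assoc_mult_mat_vec[OF P Q wc, symmetric] PQ1 wc by simp
  have xc: "x \<in> carrier_vec n" using Q wc unfolding x_def by auto
  have "x \<noteq> 0\<^sub>v n" using Px w P by auto
  moreover have "x \<in> S'" using Px w xc unfolding S'_def by auto
  ultimately obtain x' \<mu> where x'S: "x' \<in> S'" and x'0: "x' \<noteq> 0\<^sub>v n" and ev: "B *\<^sub>v x' = \<mu> \<cdot>\<^sub>v x'"
    using main[of n] by auto
  have x'c: "x' \<in> carrier_vec n" using x'S unfolding S'_def by auto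
  have "Y *\<^sub>v (P *\<^sub>v x') = \<mu> \<cdot>\<^sub>v (P *\<^sub>v x')" using PB[OF x'c] ev mult_mat_vec[OF P x'c] by simp
  moreover have "P *\<^sub>v x' \<noteq> 0\<^sub>v n"
  proof
    assume "P *\<^sub>v x' = 0\<^sub>v n"
    then have "Q *\<^sub>v (P *\<^sub>v x') = 0\<^sub>v n" using Q by auto
    then show False using assoc_mult_mat_vec[OF Q P x'c, symmetric] QP1 x'c x'0 by simp
  qed
  ultimately show ?thesis using x'S unfolding S'_def by blast
qed

lemma CE:
  fixes Y :: "nat \<Rightarrow> complex mat"
  shows "\<forall>S. subsp n S \<and> (\<exists>w\<in>S. w \<noteq> 0\<^sub>v n) \<and> (\<forall>j<k. Y j \<in> carrier_mat n n) \<and>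
    (\<forall>j<k. \<forall>v\<in>S. Y j *\<^sub>v v \<in> S) \<and>
    (\<forall>i<k. \<forall>j<k. \<forall>v\<in>S. Y i *\<^sub>v (Y j *\<^sub>v v) = Y j *\<^sub>v (Y i *\<^sub>v v)) \<longrightarrow>
    (\<exists>v\<in>S. v \<noteq> 0\<^sub>v n \<and> (\<forall>j<k. \<exists>\<mu>. Y j *\<^sub>v v = \<mu> \<cdot>\<^sub>v v))"
proof (induction k)
  case 0
  then show ?case by auto
next
  case (Suc k)
  show ?case
  proof (intro allI impI, elim conjE)
    fix S assume S: "subsp n S" and w: "\<exists>w\<in>S. w \<noteq> 0\<^sub>v n" and Yc: "\<forall>j<Suc k. Y j \<in> carrier_mat n n"
      and inv: "\<forall>j<Suc k. \<forall>v\<in>S. Y j *\<^sub>v v \<in> S"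
      and com: "\<forall>i<Suc k. \<forall>j<Suc k. \<forall>v\<in>S. Y i *\<^sub>v (Y j *\<^sub>v v) = Y j *\<^sub>v (Y i *\<^sub>v v)"
    have Sc: "\<And>v. v \<in> S \<Longrightarrow> v \<in> carrier_vec n" using S unfolding subsp_def by auto
    have Yk: "Y k \<in> carrier_mat n n" using Yc by auto
    obtain w where w1: "w \<in> S" "w \<noteq> 0\<^sub>v n" using w by auto
    have invk: "\<forall>v\<in>S. Y k *\<^sub>v v \<in> S" using inv by auto
    obtain v0 \<mu> where v0: "v0 \<in> S" "v0 \<noteq> 0\<^sub>v n" "Y k *\<^sub>v v0 = \<mu> \<cdot>\<^sub>v v0"
      using EV[OF Yk S invk w1] by auto
    define S' where "S' = {v \<in> S. Y k *\<^sub>v v = \<mu> \<cdot>\<^sub>v v}"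
    have S': "subsp n S'" unfolding subsp_def
    proof (intro conjI ballI allI)
      fix v assume "v \<in> S'" then show "v \<in> carrier_vec n" using Sc unfolding S'_def by auto
    next
      fix v w assume v: "v \<in> S'" and w: "w \<in> S'"
      then have vc: "v \<in> carrier_vec n" and wc: "w \<in> carrier_vec n" using Sc unfolding S'_def by auto
      have "v + w \<in> S" using v w S unfolding S'_def subsp_def by auto
      moreover have "Y k *\<^sub>v (v + w) = \<mu> \<cdot>\<^sub>v (v + w)"
        using v w vc wc Yk unfolding S'_def by (simp add: mult_add_distrib_mat_vec[OF Yk] smult_add_distrib_vec)
      ultimately show "v + w \<in> S'" unfolding S'_def by auto
    next
      fix a v assume v: "v \<in> S'"
      then have vc: "v \<in> carrier_vec n" using Sc unfolding S'_def by auto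
      have "a \<cdot>\<^sub>v v \<in> S" using v S unfolding S'_def subsp_def by auto
      moreover have "Y k *\<^sub>v (a \<cdot>\<^sub>v v) = \<mu> \<cdot>\<^sub>v (a \<cdot>\<^sub>v v)"
        using v unfolding S'_def by (simp add: mult_mat_vec[OF Yk vc] smult_smult_assoc mult.commute)
      ultimately show "a \<cdot>\<^sub>v v \<in> S'" unfolding S'_def by auto
    qed
    have inv': "\<forall>j<k. \<forall>v\<in>S'. Y j *\<^sub>v v \<in> S'"
    proof (intro allI impI ballI)
      fix j v assume j: "j < k" and v: "v \<in> S'"
      then have vc: "v \<in> carrier_vec n" and vS: "v \<in> S" using Sc unfolding S'_def by auto
      have Yj: "Y j \<in> carrier_mat n n" using Yc j by auto
      have "Y k *\<^sub>v (Y j *\<^sub>v v) = Y j *\<^sub>v (Y k *\<^sub>v v)" using com j vS by auto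
      also have "\<dots> = \<mu> \<cdot>\<^sub>v (Y j *\<^sub>v v)" using v mult_mat_vec[OF Yj vc] unfolding S'_def by auto
      finally show "Y j *\<^sub>v v \<in> S'" using inv j vS unfolding S'_def by auto
    qed
    have "\<exists>v\<in>S'. v \<noteq> 0\<^sub>v n \<and> (\<forall>j<k. \<exists>\<mu>. Y j *\<^sub>v v = \<mu> \<cdot>\<^sub>v v)"
      using Suc.IH S' inv' Yc com v0 unfolding S'_def by auto
    then show "\<exists>v\<in>S. v \<noteq> 0\<^sub>v n \<and> (\<forall>j<Suc k. \<exists>\<mu>. Y j *\<^sub>v v = \<mu> \<cdot>\<^sub>v v)"
      unfolding S'_def using less_Suc_eq by auto
  qed
qed


lemma ctrans_carrier[simp]: "A \<in> carrier_mat n m \<Longrightarrow> ctrans_mat A \<in> carrier_mat m n"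
  by (simp add: ctrans_mat_def conj_mat_def)
lemma ctrans_index[simp]: "i < dim_col A \<Longrightarrow> j < dim_row A \<Longrightarrow> ctrans_mat A $$ (i,j) = cnj (A $$ (j,i))"
  by (simp add: ctrans_mat_def conj_mat_def)

lemma ip_add_right: "v \<in> carrier_vec n \<Longrightarrow> w \<in> carrier_vec n \<Longrightarrow> ip n s (v + w) = ip n s v + ip n s w"
  by (simp add: ip_def algebra_simps sum.distrib)
lemma ip_minus_right: "v \<in> carrier_vec n \<Longrightarrow> w \<in> carrier_vec n \<Longrightarrow> ip n s (v - w) = ip n s v - ip n s w"
  by (simp add: ip_def algebra_simps sum_subtractf)
lemma ip_smult_right: "v \<in> carrier_vec n \<Longrightarrow> ip n s (a \<cdot>\<^sub>v v) = a * ip n s v"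
  by (simp add: ip_def algebra_simps sum_distrib_left)
lemma ip_add_left: "v \<in> carrier_vec n \<Longrightarrow> w \<in> carrier_vec n \<Longrightarrow> ip n (v + w) s = ip n v s + ip n w s"
  by (simp add: ip_def algebra_simps sum.distrib)
lemma ip_smult_left: "v \<in> carrier_vec n \<Longrightarrow> ip n (a \<cdot>\<^sub>v v) s = cnj a * ip n v s"
  by (simp add: ip_def algebra_simps sum_distrib_left)
lemma ip_zero_right[simp]: "ip n s (0\<^sub>v n) = 0"
  by (simp add: ip_def)

lemma cnj_mult_self: "cnj (z::complex) * z = of_real ((cmod z)^2)"
  by (metis complex_norm_square mult.commute)

lemma ip_self_real: "ip n v v = of_real (\<Sum>i<n. (cmod (v$i))^2)"
  unfolding ip_def of_real_sum by (rule sum.cong[OF refl], rule cnj_mult_self)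

lemma ip_self_zero: assumes v: "v \<in> carrier_vec n" and z: "ip n v v = 0" shows "v = 0\<^sub>v n"
proof -
  have "complex_of_real (\<Sum>i<n. (cmod (v$i))^2) = 0" using z ip_self_real[of n v] by metis
  then have "(\<Sum>i<n. (cmod (v$i))^2) = 0" by (simp only: of_real_eq_0_iff)
  then have "\<forall>i\<in>{..<n}. (cmod (v$i))^2 = 0" by (subst (asm) sum_nonneg_eq_0_iff) auto
  then show ?thesis using v by (intro eq_vecI) auto
qed

lemma ip_self_pos: assumes v: "v \<in> carrier_vec n" and nz: "v \<noteq> 0\<^sub>v n"
  shows "\<exists>r>0. ip n v v = of_real r"
proof -
  have "(\<Sum>i<n. (cmod (v$i))^2) \<ge> 0" by (simp add: sum_nonneg)
  moreover have "(\<Sum>i<n. (cmod (v$i))^2) \<noteq> 0"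
  proof
    assume "(\<Sum>i<n. (cmod (v$i))^2) = 0"
    then have "ip n v v = 0" using ip_self_real[of n v] by simp
    then show False using ip_self_zero[OF v] nz by simp
  qed
  ultimately show ?thesis using ip_self_real[of n v] by (intro exI[of _ "\<Sum>i<n. (cmod (v$i))^2"]) auto
qed

lemma ip_adj: assumes A: "A \<in> carrier_mat n n" and y: "y \<in> carrier_vec n" and z: "z \<in> carrier_vec n"
  shows "ip n z (A *\<^sub>v y) = ip n (ctrans_mat A *\<^sub>v z) y"
proof -
  have "ip n z (A *\<^sub>v y) = (\<Sum>i<n. \<Sum>l<n. cnj (z$i) * A$$(i,l) * y$l)"
    unfolding ip_def by (rule sum.cong[OF refl], subst mv_index[OF A y], auto simp: sum_distrib_left mult.assoc)
  also have "\<dots> = (\<Sum>l<n. \<Sum>i<n. cnj (z$i) * A$$(i,l) * y$l)" by (rule sum.swap)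
  also have "\<dots> = ip n (ctrans_mat A *\<^sub>v z) y"
    unfolding ip_def
    by (rule sum.cong[OF refl], subst mv_index[OF ctrans_carrier[OF A] z], auto simp: carrier_matD[OF A] cnj_sum sum_distrib_right sum_distrib_left intro!: sum.cong)
  finally show ?thesis .
qed

lemma ip_adj2: assumes A: "A \<in> carrier_mat n n" and y: "y \<in> carrier_vec n" and z: "z \<in> carrier_vec n"
  shows "ip n (A *\<^sub>v y) z = ip n y (ctrans_mat A *\<^sub>v z)"
  using ip_adj[OF A y z] ip_conj by metis

definition lc :: "nat \<Rightarrow> (nat \<Rightarrow> complex vec) \<Rightarrow> nat \<Rightarrow> (nat \<Rightarrow> complex) \<Rightarrow> (nat \<Rightarrow> complex) \<Rightarrow> complex vec" where
  "lc N u m a b = vec (2*N) (\<lambda>i. \<Sum>c<m. a c * u c $ i + b c * Jv N (u c) $ i)"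

lemma lc_carrier[simp]: "lc N u m a b \<in> carrier_vec (2*N)" by (simp add: lc_def)
lemma dim_lc[simp]: "dim_vec (lc N u m a b) = 2*N" by (simp add: lc_def)

lemma ip_lc_right: "ip (2*N) s (lc N u m a b) = (\<Sum>c<m. a c * ip (2*N) s (u c) + b c * ip (2*N) s (Jv N (u c)))"
proof -
  have "ip (2*N) s (lc N u m a b) = (\<Sum>i<2*N. \<Sum>c<m. a c * (cnj (s$i) * u c $ i) + b c * (cnj (s$i) * Jv N (u c) $ i))"
    unfolding ip_def lc_def by (simp add: sum_distrib_left algebra_simps)
  also have "\<dots> = (\<Sum>c<m. \<Sum>i<2*N. a c * (cnj (s$i) * u c $ i) + b c * (cnj (s$i) * Jv N (u c) $ i))"
    by (rule sum.swap)
  also have "\<dots> = (\<Sum>c<m. a c * ip (2*N) s (u c) + b c * ip (2*N) s (Jv N (u c)))"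
    unfolding ip_def by (simp add: sum.distrib sum_distrib_left)
  finally show ?thesis .
qed

lemma ip_lc_left: "ip (2*N) (lc N u m a b) s = (\<Sum>c<m. cnj (a c) * ip (2*N) (u c) s + cnj (b c) * ip (2*N) (Jv N (u c)) s)"
  by (subst ip_conj, subst ip_lc_right) (simp add: cnj_sum ip_conj[of _ s])

lemma lc_cong: "(\<And>c. c < m \<Longrightarrow> u c = u' c) \<Longrightarrow> lc N u m a b = lc N u' m a b"
  unfolding lc_def by (intro eq_vecI) auto

definition proj :: "nat \<Rightarrow> (nat \<Rightarrow> complex vec) \<Rightarrow> nat \<Rightarrow> complex vec \<Rightarrow> complex vec" where
  "proj N u m v = lc N u m (\<lambda>c. ip (2*N) (u c) v) (\<lambda>c. ip (2*N) (Jv N (u c)) v)"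

lemma proj_carrier[simp]: "proj N u m v \<in> carrier_vec (2*N)" by (simp add: proj_def)
lemma dim_proj[simp]: "dim_vec (proj N u m v) = 2*N" by (simp add: proj_def)

lemma proj_cong: "(\<And>c. c < m \<Longrightarrow> u c = u' c) \<Longrightarrow> proj N u m v = proj N u' m v"
  unfolding proj_def lc_def by (intro eq_vecI) auto

definition orth :: "nat \<Rightarrow> (nat \<Rightarrow> complex vec) \<Rightarrow> nat \<Rightarrow> bool" where
  "orth N u m \<longleftrightarrow> (\<forall>c<m. u c \<in> carrier_vec (2*N)) \<and>
     (\<forall>c<m. \<forall>d<m. ip (2*N) (u c) (u d) = (if c = d then 1 else 0) \<and> ip (2*N) (Jv N (u c)) (u d) = 0)"

definition Sset :: "nat \<Rightarrow> (nat \<Rightarrow> complex vec) \<Rightarrow> nat \<Rightarrow> complex vec set" where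
  "Sset N u m = {v \<in> carrier_vec (2*N). \<forall>c<m. ip (2*N) (u c) v = 0 \<and> ip (2*N) (Jv N (u c)) v = 0}"

lemma Sset_lc: assumes s: "s \<in> Sset N u m" and m': "m' \<le> m"
  shows "ip (2*N) s (lc N u m' a b) = 0" "ip (2*N) (lc N u m' a b) s = 0"
proof -
  have "\<And>c. c < m' \<Longrightarrow> ip (2*N) (u c) s = 0 \<and> ip (2*N) (Jv N (u c)) s = 0" using s m' unfolding Sset_def by auto
  then show "ip (2*N) (lc N u m' a b) s = 0" unfolding ip_lc_left by simp
  then show "ip (2*N) s (lc N u m' a b) = 0" by (subst ip_conj) simp
qed

lemma Sset_J: assumes s: "s \<in> Sset N u m" shows "Jv N s \<in> Sset N u m"
proof -
  have "\<And>c. c < m \<Longrightarrow> ip (2*N) (u c) s = 0 \<and> ip (2*N) (Jv N (u c)) s = 0" using s unfolding Sset_def by auto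
  then show ?thesis unfolding Sset_def using ip_J_right[of N "u _" s] ip_JJ[of N "u _" s] ip_conj[of "2*N" s]
    by auto
qed

lemma orth_cong: "(\<And>c. c < m \<Longrightarrow> u c = u' c) \<Longrightarrow> orth N u m = orth N u' m"
  unfolding orth_def by auto

lemma proj_in_S: assumes o: "orth N u m" and v: "v \<in> carrier_vec (2*N)"
  shows "v - proj N u m v \<in> Sset N u m"
proof -
  from o have uc: "\<And>c. c<m \<Longrightarrow> u c \<in> carrier_vec (2*N)" and
    on: "\<And>c d. c<m \<Longrightarrow> d<m \<Longrightarrow> ip (2*N) (u c) (u d) = (if c = d then 1 else 0)" and
    oj: "\<And>c d. c<m \<Longrightarrow> d<m \<Longrightarrow> ip (2*N) (Jv N (u c)) (u d) = 0"
    unfolding orth_def by auto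
  have oj2: "\<And>c d. c<m \<Longrightarrow> d<m \<Longrightarrow> ip (2*N) (u d) (Jv N (u c)) = 0"
    using oj ip_conj by (metis complex_cnj_zero)
  have ojj: "\<And>c d. c<m \<Longrightarrow> d<m \<Longrightarrow> ip (2*N) (Jv N (u d)) (Jv N (u c)) = (if c = d then 1 else 0)"
    using on ip_JJ by auto
  show ?thesis unfolding Sset_def
  proof (intro CollectI conjI allI impI)
    show "v - proj N u m v \<in> carrier_vec (2*N)" using v by simp
  next
    fix d assume d: "d < m"
    have "ip (2*N) (u d) (proj N u m v) = (\<Sum>c<m. (if c = d then ip (2*N) (u c) v else 0))"
      unfolding proj_def ip_lc_right using d on oj2 by (intro sum.cong) auto
    also have "\<dots> = ip (2*N) (u d) v" using d by simp
    finally show "ip (2*N) (u d) (v - proj N u m v) = 0" using v by (simp add: ip_minus_right)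
  next
    fix d assume d: "d < m"
    have "ip (2*N) (Jv N (u d)) (proj N u m v) = (\<Sum>c<m. (if c = d then ip (2*N) (Jv N (u c)) v else 0))"
      unfolding proj_def ip_lc_right using d oj ojj by (intro sum.cong) auto
    also have "\<dots> = ip (2*N) (Jv N (u d)) v" using d by simp
    finally show "ip (2*N) (Jv N (u d)) (v - proj N u m v) = 0" using v by (simp add: ip_minus_right)
  qed
qed

lemma proj_S_zero: assumes s: "s \<in> Sset N u m" shows "proj N u m s = 0\<^sub>v (2*N)"
  using s unfolding proj_def lc_def Sset_def by (intro eq_vecI) auto


lemma ip_J_left: "ip (2*N) (Jv N s) w = - cnj (ip (2*N) s (Jv N w))"
  using ip_J_right[of N s w] by simp

definition Pmat :: "nat \<Rightarrow> (nat \<Rightarrow> complex vec) \<Rightarrow> nat \<Rightarrow> complex mat" where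
  "Pmat N u m = mat (2*N) (2*N) (\<lambda>(i,l). (if i = l then 1 else 0) -
     (\<Sum>c<m. u c $ i * cnj (u c $ l) + Jv N (u c) $ i * cnj (Jv N (u c) $ l)))"

lemma Pmat_carrier[simp]: "Pmat N u m \<in> carrier_mat (2*N) (2*N)" by (simp add: Pmat_def)
lemma Pmat_dims[simp]: "dim_row (Pmat N u m) = 2*N" "dim_col (Pmat N u m) = 2*N" by (simp_all add: Pmat_def)

lemma Pmat_mv: assumes v: "v \<in> carrier_vec (2*N)"
  shows "Pmat N u m *\<^sub>v v = v - proj N u m v"
proof (rule eq_vecI)
  fix i assume "i < dim_vec (v - proj N u m v)"
  then have i: "i < 2*N" using v by simp
  have "(Pmat N u m *\<^sub>v v) $ i = (\<Sum>l<2*N. ((if i = l then 1 else 0) -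
     (\<Sum>c<m. u c $ i * cnj (u c $ l) + Jv N (u c) $ i * cnj (Jv N (u c) $ l))) * v $ l)"
    by (subst mv_index[OF Pmat_carrier v i]) (auto simp: Pmat_def i intro!: sum.cong)
  also have "\<dots> = (\<Sum>l<2*N. (if i = l then v $ l else 0) - (\<Sum>c<m. u c $ i * (cnj (u c $ l) * v $ l) + Jv N (u c) $ i * (cnj (Jv N (u c) $ l) * v $ l)))"
    by (intro sum.cong refl) (simp add: left_diff_distrib sum_distrib_right ring_distribs mult.assoc)
  also have "\<dots> = v $ i - (\<Sum>l<2*N. \<Sum>c<m. u c $ i * (cnj (u c $ l) * v $ l) + Jv N (u c) $ i * (cnj (Jv N (u c) $ l) * v $ l))"
    using i by (simp add: sum_subtractf)
  also have "(\<Sum>l<2*N. \<Sum>c<m. u c $ i * (cnj (u c $ l) * v $ l) + Jv N (u c) $ i * (cnj (Jv N (u c) $ l) * v $ l))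
     = (\<Sum>c<m. \<Sum>l<2*N. u c $ i * (cnj (u c $ l) * v $ l) + Jv N (u c) $ i * (cnj (Jv N (u c) $ l) * v $ l))"
    by (rule sum.swap)
  also have "\<dots> = proj N u m v $ i"
    unfolding proj_def lc_def ip_def using i by (simp add: sum.distrib sum_distrib_left algebra_simps)
  finally show "(Pmat N u m *\<^sub>v v) $ i = (v - proj N u m v) $ i" using i v by simp
qed (use v in simp)

lemma Pmat_trace: assumes o: "orth N u m"
  shows "(\<Sum>i<2*N. Pmat N u m $$ (i,i)) = of_nat (2*N) - of_nat (2*m)"
proof -
  have on: "\<And>c. c<m \<Longrightarrow> ip (2*N) (u c) (u c) = 1" using o unfolding orth_def by auto
  have "(\<Sum>i<2*N. Pmat N u m $$ (i,i)) = (\<Sum>i<2*N. 1 - (\<Sum>c<m. u c $ i * cnj (u c $ i) + Jv N (u c) $ i * cnj (Jv N (u c) $ i)))"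
    by (auto simp: Pmat_def intro!: sum.cong)
  also have "\<dots> = of_nat (2*N) - (\<Sum>i<2*N. \<Sum>c<m. u c $ i * cnj (u c $ i) + Jv N (u c) $ i * cnj (Jv N (u c) $ i))"
    by (simp add: sum_subtractf)
  also have "(\<Sum>i<2*N. \<Sum>c<m. u c $ i * cnj (u c $ i) + Jv N (u c) $ i * cnj (Jv N (u c) $ i))
     = (\<Sum>c<m. \<Sum>i<2*N. u c $ i * cnj (u c $ i) + Jv N (u c) $ i * cnj (Jv N (u c) $ i))"
    by (rule sum.swap)
  also have "\<dots> = (\<Sum>c<m. ip (2*N) (u c) (u c) + ip (2*N) (Jv N (u c)) (Jv N (u c)))"
    unfolding ip_def by (simp add: sum.distrib mult.commute)
  also have "\<dots> = (\<Sum>c<m. 2)" using on ip_JJ by (intro sum.cong) auto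
  finally show ?thesis by simp
qed

lemma Sset_nonzero: assumes o: "orth N u m" and m: "m < N"
  shows "\<exists>w\<in>Sset N u m. w \<noteq> 0\<^sub>v (2*N)"
proof (rule ccontr)
  assume "\<not> ?thesis"
  then have z: "\<And>w. w \<in> Sset N u m \<Longrightarrow> w = 0\<^sub>v (2*N)" by auto
  have "\<And>i. i < 2*N \<Longrightarrow> Pmat N u m $$ (i,i) = 0"
  proof -
    fix i assume i: "i < 2*N"
    let ?e = "unit_vec (2*N) i :: complex vec"
    have ec: "?e \<in> carrier_vec (2*N)" by simp
    have "Pmat N u m *\<^sub>v ?e \<in> Sset N u m" using proj_in_S[OF o ec] Pmat_mv[OF ec] by simp
    then have "Pmat N u m *\<^sub>v ?e = 0\<^sub>v (2*N)" using z by auto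
    then have "(Pmat N u m *\<^sub>v ?e) $ i = 0" using i by simp
    moreover have "(Pmat N u m *\<^sub>v ?e) $ i = (\<Sum>l<2*N. (if l = i then Pmat N u m $$ (i,i) else 0))"
      by (subst mv_index[OF Pmat_carrier ec i], rule sum.cong) (auto simp: i)
    moreover have "(\<Sum>l<2*N. (if l = i then Pmat N u m $$ (i,i) else 0)) = Pmat N u m $$ (i,i)"
      using i by simp
    ultimately show "Pmat N u m $$ (i,i) = 0" using i by simp
  qed
  then have "(\<Sum>i<2*N. Pmat N u m $$ (i,i)) = 0" by simp
  then have "(of_nat (2*N) :: complex) = of_nat (2*m)" using Pmat_trace[OF o] by simp
  then have "2*N = 2*m" using of_nat_eq_iff by blast
  then show False using m by simp
qed

definition flag :: "nat \<Rightarrow> (nat \<Rightarrow> complex mat) \<Rightarrow> nat \<Rightarrow> nat \<Rightarrow> (nat \<Rightarrow> complex vec) \<Rightarrow> bool" where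
  "flag N X k m u \<longleftrightarrow> orth N u m \<and>
     (\<forall>j<k. \<forall>b<m. \<exists>lam. X j *\<^sub>v u b = proj N u b (X j *\<^sub>v u b) + lam \<cdot>\<^sub>v u b)"

lemma inv_adj: assumes f: "flag N X k m u" and j: "j < k" and q: "qmat N (X j)" and s: "s \<in> Sset N u m"
  shows "ctrans_mat (X j) *\<^sub>v s \<in> Sset N u m"
proof -
  have X: "X j \<in> carrier_mat (2*N) (2*N)" using q unfolding qmat_def by auto
  have sc: "s \<in> carrier_vec (2*N)" using s unfolding Sset_def by auto
  have uc: "\<And>c. c < m \<Longrightarrow> u c \<in> carrier_vec (2*N)" using f unfolding flag_def orth_def by auto
  have Js: "Jv N s \<in> Sset N u m" using Sset_J[OF s] .
  show ?thesis unfolding Sset_def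
  proof (intro CollectI conjI allI impI)
    show "ctrans_mat (X j) *\<^sub>v s \<in> carrier_vec (2*N)" by (rule mult_mat_vec_carrier[OF ctrans_carrier[OF X] sc])
  next
    fix c assume c: "c < m"
    obtain lam where ev0: "X j *\<^sub>v u c = proj N u c (X j *\<^sub>v u c) + lam \<cdot>\<^sub>v u c" using f j c unfolding flag_def by auto
    define pc where "pc = proj N u c (X j *\<^sub>v u c)"
    have ev: "X j *\<^sub>v u c = pc + lam \<cdot>\<^sub>v u c" using ev0 unfolding pc_def .
    have pcc: "pc \<in> carrier_vec (2*N)" unfolding pc_def by simp
    have s0: "ip (2*N) (u c) s = 0" "ip (2*N) (Jv N (u c)) s = 0" using s c unfolding Sset_def by auto
    have "ip (2*N) (u c) (ctrans_mat (X j) *\<^sub>v s) = ip (2*N) (X j *\<^sub>v u c) s"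
      using ip_adj2[OF X uc[OF c] sc] by simp
    also have "\<dots> = ip (2*N) pc s + cnj lam * ip (2*N) (u c) s"
      unfolding ev using uc[OF c] pcc by (simp add: ip_add_left ip_smult_left)
    also have "\<dots> = 0" using Sset_lc(2)[OF s, of c] c s0 unfolding proj_def pc_def by simp
    finally show "ip (2*N) (u c) (ctrans_mat (X j) *\<^sub>v s) = 0" .
    have "ip (2*N) (Jv N (u c)) (ctrans_mat (X j) *\<^sub>v s) = ip (2*N) (X j *\<^sub>v Jv N (u c)) s"
      using ip_adj2[OF X _ sc, of "Jv N (u c)"] by simp
    also have "\<dots> = ip (2*N) (Jv N (X j *\<^sub>v u c)) s" using JX[OF q uc[OF c]] by simp
    also have "\<dots> = - ip (2*N) (Jv N s) (X j *\<^sub>v u c)"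
      using ip_J_right[of N s "X j *\<^sub>v u c"] ip_conj[of "2*N" "Jv N (X j *\<^sub>v u c)" s] by simp
    also have "ip (2*N) (Jv N s) (X j *\<^sub>v u c) = ip (2*N) (Jv N s) pc + lam * ip (2*N) (Jv N s) (u c)"
      unfolding ev using uc[OF c] pcc by (simp add: ip_add_right ip_smult_right)
    also have "ip (2*N) (Jv N s) (u c) = 0" using Js c ip_conj[of "2*N" "Jv N s" "u c"] unfolding Sset_def by auto
    also have "ip (2*N) (Jv N s) pc = 0" using Sset_lc(1)[OF Js, of c] c unfolding proj_def pc_def by simp
    finally show "ip (2*N) (Jv N (u c)) (ctrans_mat (X j) *\<^sub>v s) = 0" by simp
  qed
qed


lemma flag_orth: "flag N X k m u \<Longrightarrow> orth N u m" by (simp add: flag_def)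

lemma K: assumes f: "flag N X k m u" and i: "i < k" and q: "qmat N (X i)" and w: "w \<in> carrier_vec (2*N)"
  shows "Pmat N u m *\<^sub>v (X i *\<^sub>v (Pmat N u m *\<^sub>v w)) = Pmat N u m *\<^sub>v (X i *\<^sub>v w)"
proof -
  have X: "X i \<in> carrier_mat (2*N) (2*N)" using q unfolding qmat_def by auto
  define p where "p = proj N u m w"
  have pc: "p \<in> carrier_vec (2*N)" unfolding p_def by simp
  define z where "z = Pmat N u m *\<^sub>v (X i *\<^sub>v p)"
  have Xp: "X i *\<^sub>v p \<in> carrier_vec (2*N)" using X pc by simp
  have zeq: "z = X i *\<^sub>v p - proj N u m (X i *\<^sub>v p)" unfolding z_def using Pmat_mv[OF Xp] .
  have zS: "z \<in> Sset N u m" unfolding zeq by (rule proj_in_S[OF flag_orth[OF f] Xp])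
  have zc: "z \<in> carrier_vec (2*N)" using zS unfolding Sset_def by auto
  have "ip (2*N) z z = ip (2*N) z (X i *\<^sub>v p) - ip (2*N) z (proj N u m (X i *\<^sub>v p))"
    by (subst (2) zeq) (simp add: ip_minus_right Xp)
  also have "ip (2*N) z (proj N u m (X i *\<^sub>v p)) = 0" using Sset_lc(1)[OF zS, of m] unfolding proj_def by simp
  also have "ip (2*N) z (X i *\<^sub>v p) = ip (2*N) (ctrans_mat (X i) *\<^sub>v z) p" by (rule ip_adj[OF X pc zc])
  also have "\<dots> = 0" using Sset_lc(1)[OF inv_adj[OF f i q zS], of m] unfolding p_def proj_def by simp
  finally have "ip (2*N) z z = 0" by simp
  then have z0: "z = 0\<^sub>v (2*N)" using ip_self_zero[OF zc] by simp
  have Xw: "X i *\<^sub>v w \<in> carrier_vec (2*N)" using X w by simp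
  have "Pmat N u m *\<^sub>v (X i *\<^sub>v (Pmat N u m *\<^sub>v w)) = Pmat N u m *\<^sub>v (X i *\<^sub>v w - X i *\<^sub>v p)"
    using Pmat_mv[OF w] mult_minus_distrib_mat_vec[OF X w pc] unfolding p_def by simp
  also have "\<dots> = Pmat N u m *\<^sub>v (X i *\<^sub>v w) - z"
    unfolding z_def by (rule mult_minus_distrib_mat_vec[OF Pmat_carrier Xw Xp])
  also have "\<dots> = Pmat N u m *\<^sub>v (X i *\<^sub>v w)" using z0 mult_mat_vec_carrier[OF Pmat_carrier Xw]
    by (intro eq_vecI) auto
  finally show ?thesis .
qed

definition hyp :: "nat \<Rightarrow> (nat \<Rightarrow> complex mat) \<Rightarrow> nat \<Rightarrow> bool" where
  "hyp N X k \<longleftrightarrow> (\<forall>j<k. qmat N (X j)) \<and> (\<forall>i<k. \<forall>j<k. X i * X j = X j * X i)"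


lemma step: assumes h: "hyp N X k" and f: "flag N X k m u" and m: "m < N"
  shows "\<exists>u'. flag N X k (Suc m) u'"
proof -
  have q: "\<And>j. j < k \<Longrightarrow> qmat N (X j)" and com: "\<And>i j. i < k \<Longrightarrow> j < k \<Longrightarrow> X i * X j = X j * X i"
    using h unfolding hyp_def by auto
  have Xc: "\<And>j. j < k \<Longrightarrow> X j \<in> carrier_mat (2*N) (2*N)" using q unfolding qmat_def by auto
  have o: "orth N u m" using f by (simp add: flag_def)
  define S where "S = Sset N u m"
  define Pm where "Pm = Pmat N u m"
  define Y where "Y = (\<lambda>j. Pm * X j)"
  have Sc: "\<And>v. v \<in> S \<Longrightarrow> v \<in> carrier_vec (2*N)" unfolding S_def Sset_def by auto
  have subS: "subsp (2*N) S" unfolding subsp_def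
  proof (intro conjI ballI allI)
    fix v assume "v \<in> S" then show "v \<in> carrier_vec (2*N)" by (rule Sc)
  next
    fix v w assume v: "v \<in> S" and w: "w \<in> S"
    then show "v + w \<in> S" using Sc[OF v] Sc[OF w] unfolding S_def Sset_def by (auto simp: ip_add_right)
  next
    fix a v assume v: "v \<in> S"
    then show "a \<cdot>\<^sub>v v \<in> S" using Sc[OF v] unfolding S_def Sset_def by (auto simp: ip_smult_right)
  qed
  have YS: "\<And>j v. j < k \<Longrightarrow> v \<in> S \<Longrightarrow> Y j *\<^sub>v v = Pm *\<^sub>v (X j *\<^sub>v v)"
    unfolding Y_def Pm_def using assoc_mult_mat_vec[OF Pmat_carrier Xc Sc] by auto
  have Yc: "\<forall>j<k. Y j \<in> carrier_mat (2*N) (2*N)" unfolding Y_def Pm_def using Xc mult_carrier_mat[OF Pmat_carrier] by blast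
  have Yinv: "\<forall>j<k. \<forall>v\<in>S. Y j *\<^sub>v v \<in> S"
  proof (intro allI impI ballI)
    fix j v assume j: "j < k" and v: "v \<in> S"
    have Xv: "X j *\<^sub>v v \<in> carrier_vec (2*N)" using Xc[OF j] Sc[OF v] by simp
    show "Y j *\<^sub>v v \<in> S" unfolding YS[OF j v] Pm_def Pmat_mv[OF Xv] S_def by (rule proj_in_S[OF o Xv])
  qed
  have Ycom: "\<forall>i<k. \<forall>j<k. \<forall>v\<in>S. Y i *\<^sub>v (Y j *\<^sub>v v) = Y j *\<^sub>v (Y i *\<^sub>v v)"
  proof (intro allI impI ballI)
    fix i j v assume i: "i < k" and j: "j < k" and v: "v \<in> S"
    have vc: "v \<in> carrier_vec (2*N)" using Sc[OF v] .
    have gen: "\<And>a b. a < k \<Longrightarrow> b < k \<Longrightarrow> Y a *\<^sub>v (Y b *\<^sub>v v) = Pm *\<^sub>v ((X a * X b) *\<^sub>v v)"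
    proof -
      fix a b assume a: "a < k" and b: "b < k"
      have Xbv: "X b *\<^sub>v v \<in> carrier_vec (2*N)" using Xc[OF b] vc by simp
      have "Y a *\<^sub>v (Y b *\<^sub>v v) = Pm *\<^sub>v (X a *\<^sub>v (Pm *\<^sub>v (X b *\<^sub>v v)))"
        using YS[OF b v] YS[OF a Yinv[rule_format, OF b v]] by simp
      also have "\<dots> = Pm *\<^sub>v (X a *\<^sub>v (X b *\<^sub>v v))" unfolding Pm_def by (rule K[OF f a q[OF a] Xbv])
      also have "\<dots> = Pm *\<^sub>v ((X a * X b) *\<^sub>v v)" using Xc[OF a] Xc[OF b] vc by simp
      finally show "Y a *\<^sub>v (Y b *\<^sub>v v) = Pm *\<^sub>v ((X a * X b) *\<^sub>v v)" .
    qed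
    show "Y i *\<^sub>v (Y j *\<^sub>v v) = Y j *\<^sub>v (Y i *\<^sub>v v)" using gen[OF i j] gen[OF j i] com[OF i j] by simp
  qed
  have nz: "\<exists>w\<in>S. w \<noteq> 0\<^sub>v (2*N)" unfolding S_def by (rule Sset_nonzero[OF o m])
  have "\<exists>v\<in>S. v \<noteq> 0\<^sub>v (2*N) \<and> (\<forall>j<k. \<exists>\<mu>. Y j *\<^sub>v v = \<mu> \<cdot>\<^sub>v v)"
    by (rule CE[of "2*N" k Y, THEN spec, THEN mp]) (intro conjI subS nz Yc Yinv Ycom)
  then obtain v where vS: "v \<in> S" and v0: "v \<noteq> 0\<^sub>v (2*N)" and vev: "\<forall>j<k. \<exists>\<mu>. Y j *\<^sub>v v = \<mu> \<cdot>\<^sub>v v"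
    by blast
  have vc: "v \<in> carrier_vec (2*N)" using Sc[OF vS] .
  obtain r where r: "r > 0" "ip (2*N) v v = of_real r" using ip_self_pos[OF vc v0] by auto
  define cc where "cc = complex_of_real (1 / sqrt r)"
  define v' where "v' = cc \<cdot>\<^sub>v v"
  have v'c: "v' \<in> carrier_vec (2*N)" unfolding v'_def using vc by simp
  have v'S: "v' \<in> S" unfolding v'_def using subS vS unfolding subsp_def by auto
  have v'n: "ip (2*N) v' v' = 1"
  proof -
    have "ip (2*N) v' v' = cnj cc * cc * ip (2*N) v v" unfolding v'_def using vc
      by (simp add: ip_smult_left ip_smult_right)
    also have "\<dots> = complex_of_real ((1 / sqrt r) * (1 / sqrt r) * r)" unfolding cc_def r(2)
      by (simp only: complex_cnj_complex_of_real of_real_mult)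
    also have "(1 / sqrt r) * (1 / sqrt r) * r = 1" using r(1) by (simp add: field_simps)
    finally show ?thesis by simp
  qed
  have v'ev: "\<forall>j<k. \<exists>\<mu>. Pm *\<^sub>v (X j *\<^sub>v v') = \<mu> \<cdot>\<^sub>v v'"
  proof (intro allI impI)
    fix j assume j: "j < k"
    obtain \<mu> where "Y j *\<^sub>v v = \<mu> \<cdot>\<^sub>v v" using vev j by auto
    then have "Y j *\<^sub>v v' = \<mu> \<cdot>\<^sub>v v'" unfolding v'_def
      using mult_mat_vec[of "Y j" "2*N" "2*N" v cc] Yc j vc
      by (simp add: smult_smult_assoc mult.commute)
    then show "\<exists>\<mu>. Pm *\<^sub>v (X j *\<^sub>v v') = \<mu> \<cdot>\<^sub>v v'" using YS[OF j v'S] by auto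
  qed
  define u' where "u' = u(m := v')"
  have uu: "\<And>c. c < m \<Longrightarrow> u' c = u c" unfolding u'_def by auto
  have uc: "\<And>c. c < m \<Longrightarrow> u c \<in> carrier_vec (2*N)" using o unfolding orth_def by auto
  have v'o: "\<And>c. c < m \<Longrightarrow> ip (2*N) (u c) v' = 0 \<and> ip (2*N) (Jv N (u c)) v' = 0"
    using v'S unfolding S_def Sset_def by auto
  have o': "orth N u' (Suc m)" unfolding orth_def
  proof (intro conjI allI impI)
    fix c assume "c < Suc m" then show "u' c \<in> carrier_vec (2*N)" using uc v'c unfolding u'_def
      by (cases "c = m") auto
  next
    fix c d assume c: "c < Suc m" and d: "d < Suc m"
    show "ip (2*N) (u' c) (u' d) = (if c = d then 1 else 0)"
    proof (cases "c = m"; cases "d = m")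
      assume "c = m" "d = m" then show ?thesis using v'n unfolding u'_def by simp
    next
      assume "c = m" "d \<noteq> m" then show ?thesis using v'o[of d] d ip_conj[of "2*N" v' "u d"] unfolding u'_def by simp
    next
      assume "c \<noteq> m" "d = m" then show ?thesis using v'o[of c] c unfolding u'_def by simp
    next
      assume "c \<noteq> m" "d \<noteq> m" then show ?thesis using o c d unfolding u'_def orth_def by simp
    qed
    show "ip (2*N) (Jv N (u' c)) (u' d) = 0"
    proof (cases "c = m"; cases "d = m")
      assume "c = m" "d = m" then show ?thesis using ip_J_self unfolding u'_def by simp
    next
      assume "c = m" "d \<noteq> m" then show ?thesis
        using v'o[of d] d ip_J_left[of N v' "u d"] ip_conj[of "2*N" v' "Jv N (u d)"] unfolding u'_def by simp
    next
      assume "c \<noteq> m" "d = m" then show ?thesis using v'o[of c] c unfolding u'_def by simp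
    next
      assume "c \<noteq> m" "d \<noteq> m" then show ?thesis using o c d unfolding u'_def orth_def by simp
    qed
  qed
  have "flag N X k (Suc m) u'" unfolding flag_def
  proof (intro conjI allI impI o')
    fix j b assume j: "j < k" and b: "b < Suc m"
    show "\<exists>lam. X j *\<^sub>v u' b = proj N u' b (X j *\<^sub>v u' b) + lam \<cdot>\<^sub>v u' b"
    proof (cases "b = m")
      case False
      then have bm: "b < m" using b by simp
      have "proj N u' b (X j *\<^sub>v u' b) = proj N u b (X j *\<^sub>v u' b)" by (rule proj_cong) (use bm uu in auto)
      then show ?thesis using f j bm uu[OF bm] unfolding flag_def by auto
    next
      case True
      have pe: "proj N u' m (X j *\<^sub>v v') = proj N u m (X j *\<^sub>v v')" by (rule proj_cong) (use uu in auto)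
      obtain \<mu> where mu: "Pm *\<^sub>v (X j *\<^sub>v v') = \<mu> \<cdot>\<^sub>v v'" using v'ev j by auto
      have Xv': "X j *\<^sub>v v' \<in> carrier_vec (2*N)" using Xc[OF j] v'c by simp
      have eq: "X j *\<^sub>v v' - proj N u m (X j *\<^sub>v v') = \<mu> \<cdot>\<^sub>v v'" using mu unfolding Pm_def Pmat_mv[OF Xv'] .
      have "X j *\<^sub>v v' = proj N u m (X j *\<^sub>v v') + \<mu> \<cdot>\<^sub>v v'"
      proof (rule eq_vecI)
        fix i assume "i < dim_vec (proj N u m (X j *\<^sub>v v') + \<mu> \<cdot>\<^sub>v v')"
        then have i: "i < 2*N" using v'c by simp
        have "(X j *\<^sub>v v' - proj N u m (X j *\<^sub>v v')) $ i = (\<mu> \<cdot>\<^sub>v v') $ i" using eq by simp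
        then have "(X j *\<^sub>v v') $ i - proj N u m (X j *\<^sub>v v') $ i = \<mu> * v' $ i" using i Xv' v'c by simp
        then show "(X j *\<^sub>v v') $ i = (proj N u m (X j *\<^sub>v v') + \<mu> \<cdot>\<^sub>v v') $ i" using i Xv' v'c
          by (simp add: diff_eq_eq add.commute)
      qed (use Xv' v'c Xc[OF j] in simp)
      then show ?thesis using True pe unfolding u'_def by auto
    qed
  qed
  then show ?thesis by blast
qed

lemma flag_exists: assumes h: "hyp N X k" shows "\<exists>u. flag N X k N u"
proof -
  have "m \<le> N \<Longrightarrow> \<exists>u. flag N X k m u" for m
  proof (induction m)
    case 0 then show ?case by (simp add: flag_def orth_def)
  next
    case (Suc m)
    then obtain u where "flag N X k m u" by auto
    then show ?case using step[OF h] Suc by auto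
  qed
  then show ?thesis by simp
qed


lemma mm_index: "A \<in> carrier_mat n m \<Longrightarrow> B \<in> carrier_mat m p \<Longrightarrow> i < n \<Longrightarrow> j < p \<Longrightarrow>
  (A * B) $$ (i,j) = (\<Sum>k<m. A $$ (i,k) * B $$ (k,j))"
  by (auto simp: scalar_prod_def lessThan_atLeast0 intro!: sum.cong)

lemma Z_carrier[simp]: "Zmat N \<in> carrier_mat (2*N) (2*N)" by (simp add: Zmat_def mult_2)

lemma Z_index: "i < 2*N \<Longrightarrow> j < 2*N \<Longrightarrow> Zmat N $$ (i,j) =
   (if i < N then (if j = i+N then 1 else 0) else (if i = j+N then -1 else 0))"
  unfolding Zmat_def by (auto simp: mult_2)

lemma ZR: assumes l: "l < 2*N"
  shows "(\<Sum>b<2*N. f b * Zmat N $$ (b,l)) = (if l < N then - f (l+N) else f (l-N))"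
proof -
  have "(\<Sum>b<2*N. f b * Zmat N $$ (b,l)) = (\<Sum>b<N. f b * Zmat N $$ (b,l)) + (\<Sum>b<N. f (b+N) * Zmat N $$ (b+N,l))"
    by (rule sum2N)
  also have "(\<Sum>b<N. f b * Zmat N $$ (b,l)) = (\<Sum>b<N. if b = l - N then (if l < N then 0 else f b) else 0)"
    using l by (intro sum.cong) (auto simp: Z_index)
  also have "(\<Sum>b<N. f (b+N) * Zmat N $$ (b+N,l)) = (\<Sum>b<N. if b = l then (if l < N then - f (b+N) else 0) else 0)"
    using l by (intro sum.cong) (auto simp: Z_index)
  finally show ?thesis using l by auto
qed

lemma ZL: assumes i: "i < 2*N"
  shows "(\<Sum>a<2*N. Zmat N $$ (i,a) * f a) = (if i < N then f (i+N) else - f (i-N))"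
proof -
  have "(\<Sum>a<2*N. Zmat N $$ (i,a) * f a) = (\<Sum>a<N. Zmat N $$ (i,a) * f a) + (\<Sum>a<N. Zmat N $$ (i,a+N) * f (a+N))"
    by (rule sum2N)
  also have "(\<Sum>a<N. Zmat N $$ (i,a) * f a) = (\<Sum>a<N. if a = i - N then (if i < N then 0 else - f a) else 0)"
    using i by (intro sum.cong) (auto simp: Z_index)
  also have "(\<Sum>a<N. Zmat N $$ (i,a+N) * f (a+N)) = (\<Sum>a<N. if a = i then (if i < N then f (a+N) else 0) else 0)"
    using i by (intro sum.cong) (auto simp: Z_index)
  finally show ?thesis using i by auto
qed

lemma sharp_index: assumes X: "X \<in> carrier_mat (2*N) (2*N)" and i: "i < 2*N" and l: "l < 2*N"
  shows "sharp N X $$ (i,l) = (if l < N then (if i < N then X$$(l+N,i+N) else - X$$(l+N,i-N))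
      else (if i < N then - X$$(l-N,i+N) else X$$(l-N,i-N)))"
proof -
  have ZX: "Zmat N * transpose_mat X \<in> carrier_mat (2*N) (2*N)" using X by (intro mult_carrier_mat[OF Z_carrier]) auto
  have e1: "\<And>b. b < 2*N \<Longrightarrow> (Zmat N * transpose_mat X) $$ (i,b) = (if i < N then X$$(b,i+N) else - X$$(b,i-N))"
    using X i by (subst mm_index[OF Z_carrier _ i], auto simp: ZL)
  have "(Zmat N * transpose_mat X * Zmat N) $$ (i,l) = (\<Sum>b<2*N. (Zmat N * transpose_mat X) $$ (i,b) * Zmat N $$ (b,l))"
    by (rule mm_index[OF ZX Z_carrier i l])
  also have "\<dots> = (if l < N then - (Zmat N * transpose_mat X) $$ (i,l+N) else (Zmat N * transpose_mat X) $$ (i,l-N))"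
    by (rule ZR[OF l])
  finally have "(Zmat N * transpose_mat X * Zmat N) $$ (i,l) = (if l < N then - (Zmat N * transpose_mat X) $$ (i,l+N) else (Zmat N * transpose_mat X) $$ (i,l-N))" .
  moreover have "sharp N X $$ (i,l) = - (Zmat N * transpose_mat X * Zmat N) $$ (i,l)"
    unfolding sharp_def using carrier_matD[OF mult_carrier_mat[OF ZX Z_carrier]] i l by (simp add: index_uminus_mat)
  ultimately show ?thesis using i l X e1[of "l+N"] e1[of "l-N"] ZX by auto
qed

lemma sharp_qmat: assumes X: "X \<in> carrier_mat (2*N) (2*N)" and h: "ctrans_mat X = sharp N X"
  shows "qmat N X"
  unfolding qmat_def
proof (intro conjI allI impI X)
  fix i l assume i: "i < N" and l: "l < N"
  have "ctrans_mat X $$ (l,i) = sharp N X $$ (l,i)" using h by simp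
  then show "X $$ (i + N, l + N) = cnj (X $$ (i, l))" using X i l by (simp add: sharp_index)
  have "ctrans_mat X $$ (l,i+N) = sharp N X $$ (l,i+N)" using h by simp
  then have "cnj (X $$ (i+N, l)) = - X $$ (i, l+N)" using X i l by (simp add: sharp_index)
  then show "X $$ (i + N, l) = - cnj (X $$ (i, l + N))" by (metis complex_cnj_cnj complex_cnj_minus)
qed


lemma Z_dims[simp]: "dim_row (Zmat N) = 2*N" "dim_col (Zmat N) = 2*N" using carrier_matD[OF Z_carrier[of N]] by auto
lemma ctrans_dims[simp]: "dim_row (ctrans_mat A) = dim_col A" "dim_col (ctrans_mat A) = dim_row A"
  by (simp_all add: ctrans_mat_def conj_mat_def)

definition cv :: "nat \<Rightarrow> (nat \<Rightarrow> complex vec) \<Rightarrow> nat \<Rightarrow> complex vec" where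
  "cv N u l = (if l < N then u l else Jv N (u (l - N)))"

definition Umat :: "nat \<Rightarrow> (nat \<Rightarrow> complex vec) \<Rightarrow> complex mat" where
  "Umat N u = mat (2*N) (2*N) (\<lambda>(i,l). cv N u l $ i)"

lemma U_carrier[simp]: "Umat N u \<in> carrier_mat (2*N) (2*N)" by (simp add: Umat_def)
lemma U_dims[simp]: "dim_row (Umat N u) = 2*N" "dim_col (Umat N u) = 2*N" by (simp_all add: Umat_def)
lemma U_index[simp]: "i < 2*N \<Longrightarrow> l < 2*N \<Longrightarrow> Umat N u $$ (i,l) = cv N u l $ i" by (simp add: Umat_def)

lemma cv_carrier: "orth N u N \<Longrightarrow> l < 2*N \<Longrightarrow> cv N u l \<in> carrier_vec (2*N)"
  unfolding cv_def orth_def by auto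

lemma orthD: assumes "orth N u N" "c < N" "d < N"
  shows "ip (2*N) (u c) (u d) = (if c = d then 1 else 0)" "ip (2*N) (Jv N (u c)) (u d) = 0"
    "ip (2*N) (u d) (Jv N (u c)) = 0" "ip (2*N) (Jv N (u c)) (Jv N (u d)) = (if c = d then 1 else 0)"
proof -
  show a: "ip (2*N) (u c) (u d) = (if c = d then 1 else 0)" "ip (2*N) (Jv N (u c)) (u d) = 0"
    using assms unfolding orth_def by auto
  show "ip (2*N) (u d) (Jv N (u c)) = 0" using a(2) ip_conj[of "2*N" "u d" "Jv N (u c)"] by simp
  have "ip (2*N) (u d) (u c) = (if c = d then 1 else 0)" using assms unfolding orth_def by auto
  then show "ip (2*N) (Jv N (u c)) (Jv N (u d)) = (if c = d then 1 else 0)" using ip_JJ by simp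
qed

lemma OG: assumes o: "orth N u N" and a: "a < 2*N" and b: "b < 2*N"
  shows "ip (2*N) (cv N u a) (cv N u b) = (if a = b then 1 else 0)"
proof (cases "a < N"; cases "b < N")
  assume "a < N" "b < N" then show ?thesis using orthD[OF o] unfolding cv_def by simp
next
  assume "a < N" "\<not> b < N" then show ?thesis using orthD(3)[OF o, of "b-N" a] b unfolding cv_def by auto
next
  assume "\<not> a < N" "b < N" then show ?thesis using orthD(2)[OF o, of "a-N" b] a unfolding cv_def by auto
next
  assume 1: "\<not> a < N" "\<not> b < N"
  then have "(a - N = b - N) = (a = b)" by auto
  then show ?thesis using orthD(4)[OF o, of "a-N" "b-N"] a b 1 unfolding cv_def by auto
qed

lemma unitary_U: assumes o: "orth N u N" shows "unitary_mat (2*N) (Umat N u)"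
proof -
  have "ctrans_mat (Umat N u) * Umat N u = 1\<^sub>m (2*N)"
  proof (rule eq_matI)
    fix a b assume a: "a < dim_row (1\<^sub>m (2*N) :: complex mat)" and b: "b < dim_col (1\<^sub>m (2*N) :: complex mat)"
    then have a: "a < 2*N" and b: "b < 2*N" by auto
    have "(ctrans_mat (Umat N u) * Umat N u) $$ (a,b) = (\<Sum>i<2*N. ctrans_mat (Umat N u) $$ (a,i) * Umat N u $$ (i,b))"
      by (rule mm_index[OF ctrans_carrier[OF U_carrier] U_carrier a b])
    also have "\<dots> = ip (2*N) (cv N u a) (cv N u b)" unfolding ip_def using a b by (intro sum.cong) auto
    finally show "(ctrans_mat (Umat N u) * Umat N u) $$ (a,b) = 1\<^sub>m (2*N) $$ (a,b)" using OG[OF o a b] a b by simp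
  qed auto
  moreover then have "Umat N u * ctrans_mat (Umat N u) = 1\<^sub>m (2*N)"
    by (rule mat_mult_left_right_inverse[OF ctrans_carrier[OF U_carrier] U_carrier])
  ultimately show ?thesis unfolding unitary_mat_def by simp
qed

lemma ip_J_expand: "ip (2*N) (Jv N x) y = (\<Sum>l<N. - x$(l+N) * y$l) + (\<Sum>l<N. x$l * y$(l+N))"
  unfolding ip_def sum2N by simp

lemma sympl_U: assumes o: "orth N u N" shows "transpose_mat (Umat N u) * Zmat N * Umat N u = Zmat N"
proof (rule eq_matI)
  fix a b assume "a < dim_row (Zmat N)" "b < dim_col (Zmat N)"
  then have a: "a < 2*N" and b: "b < 2*N" using Z_carrier[of N] by auto
  have UZ: "transpose_mat (Umat N u) * Zmat N \<in> carrier_mat (2*N) (2*N)" by (intro mult_carrier_mat[OF _ Z_carrier]) auto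
  have e1: "\<And>l. l < 2*N \<Longrightarrow> (transpose_mat (Umat N u) * Zmat N) $$ (a,l) = (if l < N then - cv N u a $ (l+N) else cv N u a $ (l-N))"
  proof -
    fix l assume l: "l < 2*N"
    have "(transpose_mat (Umat N u) * Zmat N) $$ (a,l) = (\<Sum>i<2*N. transpose_mat (Umat N u) $$ (a,i) * Zmat N $$ (i,l))"
      by (rule mm_index[OF _ Z_carrier a l]) auto
    also have "\<dots> = (\<Sum>i<2*N. cv N u a $ i * Zmat N $$ (i,l))" using a by (intro sum.cong) auto
    also have "\<dots> = (if l < N then - cv N u a $ (l+N) else cv N u a $ (l-N))" by (rule ZR[OF l])
    finally show "(transpose_mat (Umat N u) * Zmat N) $$ (a,l) = (if l < N then - cv N u a $ (l+N) else cv N u a $ (l-N))" .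
  qed
  have "(transpose_mat (Umat N u) * Zmat N * Umat N u) $$ (a,b) = (\<Sum>l<2*N. (transpose_mat (Umat N u) * Zmat N) $$ (a,l) * Umat N u $$ (l,b))"
    by (rule mm_index[OF UZ U_carrier a b])
  also have "\<dots> = (\<Sum>l<N. - cv N u a $ (l+N) * cv N u b $ l) + (\<Sum>l<N. cv N u a $ l * cv N u b $ (l+N))"
    unfolding sum2N using b by (simp add: e1)
  also have "\<dots> = ip (2*N) (Jv N (cv N u a)) (cv N u b)" by (simp add: ip_J_expand)
  also have "\<dots> = Zmat N $$ (a,b)"
  proof (cases "a < N")
    case True
    then show ?thesis using orthD[OF o, of a] orthD[OF o, of "b-N"] b a unfolding cv_def
      by (auto simp: Z_index)
  next
    case False
    have "ip (2*N) (Jv N (cv N u a)) (cv N u b) = - ip (2*N) (u (a-N)) (cv N u b)"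
      using False by (simp add: cv_def ip_JJ_left)
    then show ?thesis using orthD[OF o, of "a-N"] orthD[OF o, of _ "a-N"] b a False unfolding cv_def
      by (auto simp: Z_index)
  qed
  finally show "(transpose_mat (Umat N u) * Zmat N * Umat N u) $$ (a,b) = Zmat N $$ (a,b)" .
qed (use Z_carrier[of N] in auto)

lemma sympl_unitary_U: "orth N u N \<Longrightarrow> symplectic_unitary N (Umat N u)"
  unfolding symplectic_unitary_def using unitary_U sympl_U by auto

lemma conj_entry: assumes X: "X \<in> carrier_mat (2*N) (2*N)" and o: "orth N u N" and a: "a < 2*N" and b: "b < 2*N"
  shows "(ctrans_mat (Umat N u) * X * Umat N u) $$ (a,b) = ip (2*N) (cv N u a) (X *\<^sub>v cv N u b)"
proof -
  have XU: "X * Umat N u \<in> carrier_mat (2*N) (2*N)" using X by simp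
  have "ctrans_mat (Umat N u) * X * Umat N u = ctrans_mat (Umat N u) * (X * Umat N u)"
    by (rule assoc_mult_mat[OF ctrans_carrier[OF U_carrier] X U_carrier])
  then have "(ctrans_mat (Umat N u) * X * Umat N u) $$ (a,b) = (\<Sum>i<2*N. ctrans_mat (Umat N u) $$ (a,i) * (X * Umat N u) $$ (i,b))"
    using mm_index[OF ctrans_carrier[OF U_carrier] XU a b] by simp
  also have "\<dots> = ip (2*N) (cv N u a) (X *\<^sub>v cv N u b)"
    unfolding ip_def
  proof (intro sum.cong refl)
    fix i assume i: "i \<in> {..<2*N}"
    have "(X * Umat N u) $$ (i,b) = (\<Sum>l<2*N. X $$ (i,l) * Umat N u $$ (l,b))" using i by (intro mm_index[OF X U_carrier _ b]) auto
    also have "\<dots> = (X *\<^sub>v cv N u b) $ i" using i b by (subst mv_index[OF X cv_carrier[OF o b]]) (auto intro!: sum.cong)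
    finally show "ctrans_mat (Umat N u) $$ (a,i) * (X * Umat N u) $$ (i,b) = cnj (cv N u a $ i) * (X *\<^sub>v cv N u b) $ i"
      using i a by simp
  qed
  finally show ?thesis .
qed


lemma Jv_smult: "v \<in> carrier_vec (2*N) \<Longrightarrow> Jv N (c \<cdot>\<^sub>v v) = cnj c \<cdot>\<^sub>v Jv N v"
  by (intro eq_vecI) (auto simp: Jv_def)

lemma tri: assumes f: "flag N X k N u" and j: "j < k" and a: "a < N" and b: "b < N"
  shows "b < a \<Longrightarrow> ip (2*N) (u a) (X j *\<^sub>v u b) = 0"
    and "b \<le> a \<Longrightarrow> ip (2*N) (Jv N (u a)) (X j *\<^sub>v u b) = 0"
proof -
  have o: "orth N u N" using f by (simp add: flag_def)
  obtain lam where ev0: "X j *\<^sub>v u b = proj N u b (X j *\<^sub>v u b) + lam \<cdot>\<^sub>v u b" using f j b unfolding flag_def by auto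
  define pc where "pc = proj N u b (X j *\<^sub>v u b)"
  have ev: "X j *\<^sub>v u b = pc + lam \<cdot>\<^sub>v u b" using ev0 unfolding pc_def .
  have ub: "u b \<in> carrier_vec (2*N)" using o b unfolding orth_def by auto
  have pcc: "pc \<in> carrier_vec (2*N)" unfolding pc_def by simp
  {
    assume ba: "b < a"
    have "ip (2*N) (u a) (X j *\<^sub>v u b) = ip (2*N) (u a) pc + lam * ip (2*N) (u a) (u b)"
      unfolding ev using ub pcc by (simp add: ip_add_right ip_smult_right)
    also have "ip (2*N) (u a) pc = 0" unfolding pc_def proj_def ip_lc_right
      using orthD[OF o] a b ba by (intro sum.neutral) auto
    finally show "ip (2*N) (u a) (X j *\<^sub>v u b) = 0" using orthD(1)[OF o a b] ba by simp
  }
  {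
    assume ba: "b \<le> a"
    have "ip (2*N) (Jv N (u a)) (X j *\<^sub>v u b) = ip (2*N) (Jv N (u a)) pc + lam * ip (2*N) (Jv N (u a)) (u b)"
      unfolding ev using ub pcc by (simp add: ip_add_right ip_smult_right)
    also have "ip (2*N) (Jv N (u a)) pc = 0" unfolding pc_def proj_def ip_lc_right
      using orthD[OF o] a b ba by (intro sum.neutral) auto
    finally show "ip (2*N) (Jv N (u a)) (X j *\<^sub>v u b) = 0" using orthD(2)[OF o a b] by simp
  }
qed

lemma block: assumes q: "qmat N X" and o: "orth N u N"
  shows "ctrans_mat (Umat N u) * X * Umat N u =
    four_block_mat (mat N N (\<lambda>(a,b). ip (2*N) (u a) (X *\<^sub>v u b))) (mat N N (\<lambda>(a,b). ip (2*N) (u a) (X *\<^sub>v Jv N (u b))))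
      (- conj_mat (mat N N (\<lambda>(a,b). ip (2*N) (u a) (X *\<^sub>v Jv N (u b))))) (conj_mat (mat N N (\<lambda>(a,b). ip (2*N) (u a) (X *\<^sub>v u b))))"
    (is "?L = four_block_mat ?T ?S _ _")
proof -
  have X: "X \<in> carrier_mat (2*N) (2*N)" using q unfolding qmat_def by auto
  have uc: "\<And>c. c < N \<Longrightarrow> u c \<in> carrier_vec (2*N)" using o unfolding orth_def by auto
  have L: "?L \<in> carrier_mat (2*N) (2*N)" using mult_carrier_mat[OF mult_carrier_mat[OF ctrans_carrier[OF U_carrier] X] U_carrier] .
  show ?thesis
  proof (rule eq_matI)
    fix a b assume "a < dim_row (four_block_mat ?T ?S (- conj_mat ?S) (conj_mat ?T))"
      "b < dim_col (four_block_mat ?T ?S (- conj_mat ?S) (conj_mat ?T))"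
    then have a: "a < 2*N" and b: "b < 2*N" by (auto simp: conj_mat_def)
    have e: "?L $$ (a,b) = ip (2*N) (cv N u a) (X *\<^sub>v cv N u b)" by (rule conj_entry[OF X o a b])
    show "?L $$ (a,b) = four_block_mat ?T ?S (- conj_mat ?S) (conj_mat ?T) $$ (a,b)"
    proof (cases "a < N"; cases "b < N")
      assume "a < N" "b < N" then show ?thesis using e a b by (simp add: cv_def conj_mat_def)
    next
      assume "a < N" "\<not> b < N" then show ?thesis using e a b by (simp add: cv_def conj_mat_def)
    next
      assume 1: "\<not> a < N" "b < N"
      have "ip (2*N) (Jv N (u (a-N))) (X *\<^sub>v u b) = - cnj (ip (2*N) (u (a-N)) (X *\<^sub>v Jv N (u b)))"
        using JX[OF q uc[OF 1(2)]] ip_J_right[of N "u (a-N)" "X *\<^sub>v u b"] by simp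
      then show ?thesis using e a b 1 by (simp add: cv_def conj_mat_def)
    next
      assume 1: "\<not> a < N" "\<not> b < N"
      have "ip (2*N) (Jv N (u (a-N))) (X *\<^sub>v Jv N (u (b-N))) = cnj (ip (2*N) (u (a-N)) (X *\<^sub>v u (b-N)))"
        using JX[OF q uc[of "b-N"]] b 1 ip_JJ[of N "u (a-N)" "X *\<^sub>v u (b-N)"] ip_conj[of "2*N" "X *\<^sub>v u (b-N)"] by simp
      then show ?thesis using e a b 1 by (simp add: cv_def conj_mat_def)
    qed
  qed (use L in \<open>auto simp: conj_mat_def\<close>)
qed

lemma part1: assumes h: "hyp N X k" and f: "flag N X k N u" and j: "j < k"
  shows "\<exists>T S. T \<in> carrier_mat N N \<and> S \<in> carrier_mat N N \<and>
             upper_triangular T \<and> strictly_upper_triangular S \<and>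
             ctrans_mat (Umat N u) * X j * Umat N u = four_block_mat T S (- conj_mat S) (conj_mat T)"
proof -
  have q: "qmat N (X j)" using h j unfolding hyp_def by auto
  have o: "orth N u N" using f by (simp add: flag_def)
  have uc: "\<And>c. c < N \<Longrightarrow> u c \<in> carrier_vec (2*N)" using o unfolding orth_def by auto
  let ?T = "mat N N (\<lambda>(a,b). ip (2*N) (u a) (X j *\<^sub>v u b))"
  let ?S = "mat N N (\<lambda>(a,b). ip (2*N) (u a) (X j *\<^sub>v Jv N (u b)))"
  have "upper_triangular ?T" unfolding upper_triangular_def using tri(1)[OF f j] by auto
  moreover have "strictly_upper_triangular ?S" unfolding strictly_upper_triangular_def
  proof (intro allI impI)
    fix a b assume a: "a < dim_row ?S" and ba: "b \<le> a" and b: "b < dim_col ?S"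
    have "ip (2*N) (u a) (X j *\<^sub>v Jv N (u b)) = - cnj (ip (2*N) (Jv N (u a)) (X j *\<^sub>v u b))"
      using JX[OF q uc[of b]] b ip_J_right[of N "u a" "X j *\<^sub>v u b"] by simp
    then show "?S $$ (a,b) = 0" using tri(2)[OF f j, of a b] a b ba by simp
  qed
  ultimately show ?thesis using block[OF q o] by (intro exI[of _ ?T] exI[of _ ?S]) auto
qed

lemma normal_ev: assumes A: "A \<in> carrier_mat n n" and nA: "A * ctrans_mat A = ctrans_mat A * A"
  and v: "v \<in> carrier_vec n" and ev: "A *\<^sub>v v = \<mu> \<cdot>\<^sub>v v"
  shows "ctrans_mat A *\<^sub>v v = cnj \<mu> \<cdot>\<^sub>v v"
proof -
  define w where "w = ctrans_mat A *\<^sub>v v"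
  have wc: "w \<in> carrier_vec n" unfolding w_def using mult_mat_vec_carrier[OF ctrans_carrier[OF A] v] .
  define P where "P = ip n v v"
  have Pr: "cnj P = P" unfolding P_def using ip_conj[of n v v] by simp
  have i1: "ip n w v = \<mu> * P" unfolding w_def P_def using ip_adj[OF A v v] ev ip_smult_right[OF v] by simp
  have i2: "ip n v w = cnj \<mu> * P" using i1 ip_conj[of n v w] Pr by simp
  have "A *\<^sub>v w = (A * ctrans_mat A) *\<^sub>v v" unfolding w_def using assoc_mult_mat_vec[OF A ctrans_carrier[OF A] v] by simp
  also have "\<dots> = ctrans_mat A *\<^sub>v (A *\<^sub>v v)" unfolding nA using assoc_mult_mat_vec[OF ctrans_carrier[OF A] A v] by simp
  also have "\<dots> = \<mu> \<cdot>\<^sub>v w" unfolding ev w_def using mult_mat_vec[OF ctrans_carrier[OF A] v] by simp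
  finally have Aw: "A *\<^sub>v w = \<mu> \<cdot>\<^sub>v w" .
  have i3: "ip n w w = \<mu> * cnj \<mu> * P"
  proof -
    have "ip n w w = ip n v (A *\<^sub>v w)" using ip_adj[OF A wc v] unfolding w_def by simp
    also have "\<dots> = \<mu> * ip n v w" unfolding Aw using ip_smult_right[OF wc] by simp
    finally show ?thesis using i2 by simp
  qed
  define z where "z = w - cnj \<mu> \<cdot>\<^sub>v v"
  have zc: "z \<in> carrier_vec n" unfolding z_def using wc v by simp
  have "ip n z z = ip n w w - cnj \<mu> * ip n w v - \<mu> * ip n v w + \<mu> * cnj \<mu> * P"
  proof -
    have sv: "cnj \<mu> \<cdot>\<^sub>v v \<in> carrier_vec n" using v by simp
    have zz: "ip n z z = ip n z w - ip n z (cnj \<mu> \<cdot>\<^sub>v v)" unfolding z_def by (rule ip_minus_right[OF wc sv])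
    have l: "\<And>y. ip n z y = ip n w y - \<mu> * ip n v y"
      unfolding z_def using ip_conj[of n "w - cnj \<mu> \<cdot>\<^sub>v v"] ip_minus_right[OF wc sv]
    proof -
      fix y
      have "ip n y (w - cnj \<mu> \<cdot>\<^sub>v v) = ip n y w - cnj \<mu> * ip n y v"
        using ip_minus_right[OF wc sv, of y] ip_smult_right[OF v] by simp
      then show "ip n (w - cnj \<mu> \<cdot>\<^sub>v v) y = ip n w y - \<mu> * ip n v y"
        using ip_conj[of n "w - cnj \<mu> \<cdot>\<^sub>v v" y] ip_conj[of n w y] ip_conj[of n v y] by simp
    qed
    have a1: "ip n z w = ip n w w - \<mu> * ip n v w" by (rule l)
    have a2: "ip n z (cnj \<mu> \<cdot>\<^sub>v v) = cnj \<mu> * ip n w v - \<mu> * (cnj \<mu> * P)"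
      using l[of "cnj \<mu> \<cdot>\<^sub>v v"] unfolding P_def by (simp only: ip_smult_right[OF v])
    show ?thesis unfolding zz a1 a2 by (simp add: algebra_simps)
  qed
  also have "\<dots> = 0" using i1 i2 i3 by (simp add: algebra_simps)
  finally have z0: "z = 0\<^sub>v n" using ip_self_zero[OF zc] by simp
  show ?thesis unfolding w_def[symmetric]
  proof (rule eq_vecI)
    fix i assume "i < dim_vec (cnj \<mu> \<cdot>\<^sub>v v)"
    then have i: "i < n" using v by simp
    have "z $ i = 0" using z0 i by simp
    then show "w $ i = (cnj \<mu> \<cdot>\<^sub>v v) $ i" using i wc v unfolding z_def by simp
  qed (use wc v in simp)
qed


lemma eig: assumes h: "hyp N X k" and nm: "\<forall>j<k. normal_mat (X j)" and f: "flag N X k N u"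
  shows "b < N \<Longrightarrow> \<forall>j<k. \<exists>lam. X j *\<^sub>v u b = lam \<cdot>\<^sub>v u b"
proof (induction b rule: less_induct)
  case (less b)
  have o: "orth N u N" using f by (simp add: flag_def)
  have uc: "\<And>c. c < N \<Longrightarrow> u c \<in> carrier_vec (2*N)" using o unfolding orth_def by auto
  show ?case
  proof (intro allI impI)
    fix j assume j: "j < k"
    have q: "qmat N (X j)" using h j unfolding hyp_def by auto
    have X: "X j \<in> carrier_mat (2*N) (2*N)" using q unfolding qmat_def by auto
    have nA: "X j * ctrans_mat (X j) = ctrans_mat (X j) * X j" using nm j unfolding normal_mat_def by auto
    obtain lam where ev0: "X j *\<^sub>v u b = proj N u b (X j *\<^sub>v u b) + lam \<cdot>\<^sub>v u b"
      using f j less(2) unfolding flag_def by auto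
    have ub: "u b \<in> carrier_vec (2*N)" using uc less(2) .
    have z: "\<And>c. c < b \<Longrightarrow> ip (2*N) (u c) (X j *\<^sub>v u b) = 0 \<and> ip (2*N) (Jv N (u c)) (X j *\<^sub>v u b) = 0"
    proof -
      fix c assume cb: "c < b"
      have cN: "c < N" using cb less(2) by simp
      obtain mu where mu: "X j *\<^sub>v u c = mu \<cdot>\<^sub>v u c" using less.IH[OF cb cN] j by auto
      have adj: "ctrans_mat (X j) *\<^sub>v u c = cnj mu \<cdot>\<^sub>v u c" by (rule normal_ev[OF X nA uc[OF cN] mu])
      have "ip (2*N) (u c) (X j *\<^sub>v u b) = ip (2*N) (ctrans_mat (X j) *\<^sub>v u c) (u b)"
        by (rule ip_adj[OF X ub uc[OF cN]])
      also have "\<dots> = mu * ip (2*N) (u c) (u b)" unfolding adj using ip_smult_left[OF uc[OF cN]] by simp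
      also have "\<dots> = 0" using orthD(1)[OF o cN less(2)] cb by simp
      finally have 1: "ip (2*N) (u c) (X j *\<^sub>v u b) = 0" .
      have "ip (2*N) (Jv N (u c)) (X j *\<^sub>v u b) = - cnj (ip (2*N) (u c) (Jv N (X j *\<^sub>v u b)))"
        by (rule ip_J_left)
      also have "ip (2*N) (u c) (Jv N (X j *\<^sub>v u b)) = ip (2*N) (u c) (X j *\<^sub>v Jv N (u b))"
        using JX[OF q ub] by simp
      also have "\<dots> = ip (2*N) (ctrans_mat (X j) *\<^sub>v u c) (Jv N (u b))"
        by (rule ip_adj[OF X Jv_carrier uc[OF cN]])
      also have "\<dots> = mu * ip (2*N) (u c) (Jv N (u b))" unfolding adj using ip_smult_left[OF uc[OF cN]] by simp
      also have "ip (2*N) (u c) (Jv N (u b)) = 0" using orthD(3)[OF o less(2) cN] .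
      finally have 2: "ip (2*N) (Jv N (u c)) (X j *\<^sub>v u b) = 0" by simp
      show "ip (2*N) (u c) (X j *\<^sub>v u b) = 0 \<and> ip (2*N) (Jv N (u c)) (X j *\<^sub>v u b) = 0" using 1 2 by simp
    qed
    have p0: "proj N u b (X j *\<^sub>v u b) = 0\<^sub>v (2*N)"
      unfolding proj_def lc_def using z by (intro eq_vecI) auto
    have "X j *\<^sub>v u b = lam \<cdot>\<^sub>v u b" using ev0 unfolding p0 using ub by simp
    then show "\<exists>lam. X j *\<^sub>v u b = lam \<cdot>\<^sub>v u b" by blast
  qed
qed

lemma part2: assumes h: "hyp N X k" and nm: "\<forall>j<k. normal_mat (X j)" and f: "flag N X k N u" and j: "j < k"
  shows "\<exists>D. D \<in> carrier_mat N N \<and> diagonal_mat D \<and>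
             ctrans_mat (Umat N u) * X j * Umat N u = four_block_mat D (0\<^sub>m N N) (0\<^sub>m N N) (conj_mat D)"
proof -
  have q: "qmat N (X j)" using h j unfolding hyp_def by auto
  have o: "orth N u N" using f by (simp add: flag_def)
  have uc: "\<And>c. c < N \<Longrightarrow> u c \<in> carrier_vec (2*N)" using o unfolding orth_def by auto
  let ?T = "mat N N (\<lambda>(a,b). ip (2*N) (u a) (X j *\<^sub>v u b))"
  let ?S = "mat N N (\<lambda>(a,b). ip (2*N) (u a) (X j *\<^sub>v Jv N (u b)))"
  have ev: "\<And>b. b < N \<Longrightarrow> \<exists>lam. X j *\<^sub>v u b = lam \<cdot>\<^sub>v u b" using eig[OF h nm f] j by auto
  have "diagonal_mat ?T" unfolding diagonal_mat_def
  proof (intro allI impI)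
    fix a b assume a: "a < dim_row ?T" and b: "b < dim_col ?T" and ab: "a \<noteq> b"
    obtain lam where l: "X j *\<^sub>v u b = lam \<cdot>\<^sub>v u b" using ev b by auto
    show "?T $$ (a,b) = 0" using a b ab l orthD(1)[OF o, of a b] ip_smult_right[OF uc[of b]] by simp
  qed
  moreover have S0: "?S = 0\<^sub>m N N"
  proof (rule eq_matI)
    fix a b assume a: "a < dim_row (0\<^sub>m N N :: complex mat)" and b: "b < dim_col (0\<^sub>m N N :: complex mat)"
    then have a: "a < N" and b: "b < N" by auto
    obtain lam where l: "X j *\<^sub>v u b = lam \<cdot>\<^sub>v u b" using ev b by auto
    have "ip (2*N) (u a) (X j *\<^sub>v Jv N (u b)) = ip (2*N) (u a) (cnj lam \<cdot>\<^sub>v Jv N (u b))"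
      using JX[OF q uc[OF b]] l Jv_smult[OF uc[OF b]] by simp
    also have "\<dots> = 0" using ip_smult_right[OF Jv_carrier] orthD(3)[OF o b a] by simp
    finally show "?S $$ (a,b) = 0\<^sub>m N N $$ (a,b)" using a b by simp
  qed auto
  moreover have "- conj_mat (0\<^sub>m N N) = (0\<^sub>m N N :: complex mat)"
    by (intro eq_matI) (auto simp: conj_mat_def)
  ultimately show ?thesis using block[OF q o] by (intro exI[of _ ?T]) auto
qed

lemma ZZ: "Zmat N * Zmat N = - 1\<^sub>m (2*N)"
proof (rule eq_matI)
  fix i l assume "i < dim_row (- 1\<^sub>m (2*N) :: complex mat)" "l < dim_col (- 1\<^sub>m (2*N) :: complex mat)"
  then have i: "i < 2*N" and l: "l < 2*N" by auto
  have "(Zmat N * Zmat N) $$ (i,l) = (\<Sum>a<2*N. Zmat N $$ (i,a) * Zmat N $$ (a,l))"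
    by (rule mm_index[OF Z_carrier Z_carrier i l])
  also have "\<dots> = (if i < N then Zmat N $$ (i+N, l) else - Zmat N $$ (i-N, l))" by (rule ZL[OF i])
  finally show "(Zmat N * Zmat N) $$ (i,l) = (- 1\<^sub>m (2*N)) $$ (i,l)" using i l by (auto simp: Z_index)
qed auto

lemma sharp_sympl: assumes s: "symplectic_unitary N U" shows "ctrans_mat U = sharp N U"
proof -
  have U: "U \<in> carrier_mat (2*N) (2*N)" and UU: "U * ctrans_mat U = 1\<^sub>m (2*N)" and
    sy: "transpose_mat U * Zmat N * U = Zmat N"
    using s unfolding symplectic_unitary_def unitary_mat_def by auto
  have Uc: "ctrans_mat U \<in> carrier_mat (2*N) (2*N)" using U by simp
  have UT: "transpose_mat U \<in> carrier_mat (2*N) (2*N)" using U by simp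
  have UTZ: "transpose_mat U * Zmat N \<in> carrier_mat (2*N) (2*N)" using UT by simp
  have "transpose_mat U * Zmat N = (transpose_mat U * Zmat N) * (U * ctrans_mat U)"
    unfolding UU using UTZ by simp
  also have "\<dots> = (transpose_mat U * Zmat N * U) * ctrans_mat U"
    using assoc_mult_mat[OF UTZ U Uc] by simp
  finally have e1: "transpose_mat U * Zmat N = Zmat N * ctrans_mat U" unfolding sy .
  have "Zmat N * transpose_mat U * Zmat N = Zmat N * (transpose_mat U * Zmat N)"
    by (rule assoc_mult_mat[OF Z_carrier UT Z_carrier])
  also have "\<dots> = (Zmat N * Zmat N) * ctrans_mat U"
    unfolding e1 using assoc_mult_mat[OF Z_carrier Z_carrier Uc] by simp
  also have "\<dots> = - ctrans_mat U" unfolding ZZ using Uc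
    by (subst uminus_mult_left_mat) (auto simp: carrier_matD[OF Uc])
  finally show ?thesis unfolding sharp_def by simp
qed

lemma cnj_hom: "comm_ring_hom cnj" by unfold_locales auto

lemma part3: assumes s: "symplectic_unitary N U"
  and P2: "\<forall>(k::nat) (X :: nat \<Rightarrow> complex mat).
       (\<forall>j<k. X j \<in> carrier_mat (2 * N) (2 * N)) \<and>
       (\<forall>i<k. \<forall>j<k. X i * X j = X j * X i) \<and>
       (\<forall>j<k. ctrans_mat (X j) = sharp N (X j)) \<and>
       (\<forall>j<k. normal_mat (X j)) \<longrightarrow>
       (\<exists>U. symplectic_unitary N U \<and>
          (\<forall>j<k. \<exists>D. D \<in> carrier_mat N N \<and> diagonal_mat D \<and>
             ctrans_mat U * X j * U = four_block_mat D (0\<^sub>m N N) (0\<^sub>m N N) (conj_mat D)))"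
  shows "det U = 1"
proof -
  have U: "U \<in> carrier_mat (2*N) (2*N)" and UU: "U * ctrans_mat U = 1\<^sub>m (2*N)" and UU2: "ctrans_mat U * U = 1\<^sub>m (2*N)"
    using s unfolding symplectic_unitary_def unitary_mat_def by auto
  have "normal_mat U" unfolding normal_mat_def using UU UU2 by simp
  then obtain V where V: "symplectic_unitary N V" and
    ex: "\<exists>D. D \<in> carrier_mat N N \<and> diagonal_mat D \<and>
             ctrans_mat V * U * V = four_block_mat D (0\<^sub>m N N) (0\<^sub>m N N) (conj_mat D)"
    using P2[rule_format, of 1 "\<lambda>_. U"] U sharp_sympl[OF s] by auto
  obtain D where D: "D \<in> carrier_mat N N" and M: "ctrans_mat V * U * V = four_block_mat D (0\<^sub>m N N) (0\<^sub>m N N) (conj_mat D)"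
    using ex by auto
  have Vc: "V \<in> carrier_mat (2*N) (2*N)" and VV: "ctrans_mat V * V = 1\<^sub>m (2*N)"
    using V unfolding symplectic_unitary_def unitary_mat_def by auto
  have Vc': "ctrans_mat V \<in> carrier_mat (2*N) (2*N)" using Vc by simp
  have "det (ctrans_mat V * U * V) = det (ctrans_mat V) * det U * det V"
    using det_mult[OF mult_carrier_mat[OF Vc' U] Vc] det_mult[OF Vc' U] by simp
  also have "det (ctrans_mat V) * det V = 1" using det_mult[OF Vc' Vc] VV by simp
  then have "det (ctrans_mat V) * det U * det V = det U" by (simp add: algebra_simps)
  finally have d1: "det U = det (four_block_mat D (0\<^sub>m N N) (0\<^sub>m N N) (conj_mat D))" unfolding M by simp
  have cD: "conj_mat D \<in> carrier_mat N N" using D by (simp add: conj_mat_def)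
  have "det (four_block_mat D (0\<^sub>m N N) (0\<^sub>m N N) (conj_mat D)) = det D * det (conj_mat D)"
    by (rule det_four_block_mat_lower_left_zero[OF D _ refl cD]) simp
  also have "det (conj_mat D) = cnj (det D)" unfolding conj_mat_def by (rule comm_ring_hom.hom_det[OF cnj_hom])
  finally have d2: "det U = complex_of_real ((cmod (det D))^2)" unfolding d1 using complex_norm_square by simp
  have "det (ctrans_mat U) = cnj (det U)"
    unfolding ctrans_mat_def conj_mat_def
    by (subst det_transpose[of _ "2*N"]) (use U in \<open>simp_all add: comm_ring_hom.hom_det[OF cnj_hom]\<close>)
  moreover have "det (ctrans_mat U) * det U = 1" using det_mult[OF ctrans_carrier[OF U] U] UU2 by simp
  ultimately have "cnj (det U) * det U = 1" by simp
  then have "complex_of_real ((cmod (det D))^2 * (cmod (det D))^2) = 1" unfolding d2 by simp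
  then have "(cmod (det D))^2 * (cmod (det D))^2 = 1" using of_real_eq_1_iff by blast
  then have "(cmod (det D))^2 = 1"
    by (metis abs_of_nonneg power2_eq_square real_sqrt_abs real_sqrt_one zero_le_power2 real_sqrt_mult_self)
  then show ?thesis unfolding d2 by simp
qed


theorem mainTheorem1:
  fixes N :: nat
  shows
   "(\<forall>(k::nat) (X :: nat \<Rightarrow> complex mat).
       (\<forall>j<k. X j \<in> carrier_mat (2 * N) (2 * N)) \<and>
       (\<forall>i<k. \<forall>j<k. X i * X j = X j * X i) \<and>
       (\<forall>j<k. ctrans_mat (X j) = sharp N (X j)) \<longrightarrow>
       (\<exists>U. symplectic_unitary N U \<and>
          (\<forall>j<k. \<exists>T S. T \<in> carrier_mat N N \<and> S \<in> carrier_mat N N \<and>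
             upper_triangular T \<and> strictly_upper_triangular S \<and>
             ctrans_mat U * X j * U = four_block_mat T S (- conj_mat S) (conj_mat T))))
    \<and>
    (\<forall>(k::nat) (X :: nat \<Rightarrow> complex mat).
       (\<forall>j<k. X j \<in> carrier_mat (2 * N) (2 * N)) \<and>
       (\<forall>i<k. \<forall>j<k. X i * X j = X j * X i) \<and>
       (\<forall>j<k. ctrans_mat (X j) = sharp N (X j)) \<and>
       (\<forall>j<k. normal_mat (X j)) \<longrightarrow>
       (\<exists>U. symplectic_unitary N U \<and>
          (\<forall>j<k. \<exists>D. D \<in> carrier_mat N N \<and> diagonal_mat D \<and>
             ctrans_mat U * X j * U = four_block_mat D (0\<^sub>m N N) (0\<^sub>m N N) (conj_mat D))))
    \<and>
    (\<forall>U. symplectic_unitary N U \<longrightarrow> det U = 1)"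
proof -
  have H: "\<And>(k::nat) (X :: nat \<Rightarrow> complex mat). (\<forall>j<k. X j \<in> carrier_mat (2 * N) (2 * N)) \<Longrightarrow>
       (\<forall>i<k. \<forall>j<k. X i * X j = X j * X i) \<Longrightarrow>
       (\<forall>j<k. ctrans_mat (X j) = sharp N (X j)) \<Longrightarrow> hyp N X k"
    unfolding hyp_def using sharp_qmat by blast
  have P1: "\<forall>(k::nat) (X :: nat \<Rightarrow> complex mat).
       (\<forall>j<k. X j \<in> carrier_mat (2 * N) (2 * N)) \<and>
       (\<forall>i<k. \<forall>j<k. X i * X j = X j * X i) \<and>
       (\<forall>j<k. ctrans_mat (X j) = sharp N (X j)) \<longrightarrow>
       (\<exists>U. symplectic_unitary N U \<and>
          (\<forall>j<k. \<exists>T S. T \<in> carrier_mat N N \<and> S \<in> carrier_mat N N \<and>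
             upper_triangular T \<and> strictly_upper_triangular S \<and>
             ctrans_mat U * X j * U = four_block_mat T S (- conj_mat S) (conj_mat T)))"
  proof (intro allI impI, elim conjE)
    fix k :: nat and X :: "nat \<Rightarrow> complex mat" assume a1: "\<forall>j<k. X j \<in> carrier_mat (2 * N) (2 * N)" and a2: "\<forall>i<k. \<forall>j<k. X i * X j = X j * X i"
      and a3: "\<forall>j<k. ctrans_mat (X j) = sharp N (X j)"
    have h: "hyp N X k" using H[OF a1 a2 a3] .
    obtain u where f: "flag N X k N u" using flag_exists[OF h] by auto
    show "\<exists>U. symplectic_unitary N U \<and>
          (\<forall>j<k. \<exists>T S. T \<in> carrier_mat N N \<and> S \<in> carrier_mat N N \<and>
             upper_triangular T \<and> strictly_upper_triangular S \<and>
             ctrans_mat U * X j * U = four_block_mat T S (- conj_mat S) (conj_mat T))"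
      using sympl_unitary_U[OF flag_orth[OF f]] part1[OF h f] by blast
  qed
  have P2: "\<forall>(k::nat) (X :: nat \<Rightarrow> complex mat).
       (\<forall>j<k. X j \<in> carrier_mat (2 * N) (2 * N)) \<and>
       (\<forall>i<k. \<forall>j<k. X i * X j = X j * X i) \<and>
       (\<forall>j<k. ctrans_mat (X j) = sharp N (X j)) \<and>
       (\<forall>j<k. normal_mat (X j)) \<longrightarrow>
       (\<exists>U. symplectic_unitary N U \<and>
          (\<forall>j<k. \<exists>D. D \<in> carrier_mat N N \<and> diagonal_mat D \<and>
             ctrans_mat U * X j * U = four_block_mat D (0\<^sub>m N N) (0\<^sub>m N N) (conj_mat D)))"
  proof (intro allI impI, elim conjE)
    fix k :: nat and X :: "nat \<Rightarrow> complex mat" assume a1: "\<forall>j<k. X j \<in> carrier_mat (2 * N) (2 * N)" and a2: "\<forall>i<k. \<forall>j<k. X i * X j = X j * X i"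
      and a3: "\<forall>j<k. ctrans_mat (X j) = sharp N (X j)" and a4: "\<forall>j<k. normal_mat (X j)"
    have h: "hyp N X k" using H[OF a1 a2 a3] .
    obtain u where f: "flag N X k N u" using flag_exists[OF h] by auto
    show "\<exists>U. symplectic_unitary N U \<and>
          (\<forall>j<k. \<exists>D. D \<in> carrier_mat N N \<and> diagonal_mat D \<and>
             ctrans_mat U * X j * U = four_block_mat D (0\<^sub>m N N) (0\<^sub>m N N) (conj_mat D))"
      using sympl_unitary_U[OF flag_orth[OF f]] part2[OF h a4 f] by blast
  qed
  have P3: "\<forall>U. symplectic_unitary N U \<longrightarrow> det U = 1"
    using part3[OF _ P2] by blast
  show ?thesis using P1 P2 P3 by blast
qed

end
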